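(* Let $A,\bar A,B,\bar B,C,\bar C$ be six pairwise distinct points in the real projective plane such that no four of them are collinear, and such that the three pairs $\{A,\bar A\},\{B,\bar B\},\{C,\bar C\}$ are not the pairs of opposite vertices of one and the same complete quadrilateral. Apply Schroeter's construction to these three pairs. Then all points obtained by Schroeter's construction (including $A,\bar A,B,\bar B,C,\bar C$) lie on one and the same cubic curve.
   Context: Notation: for distinct points $P,Q$, $PQ$ is the line through them; for distinct lines $l_1,l_2$, $l_1\wedge l_2$ is their intersection point. Schroeter's construction: one starts with the three pairs of points $\{A,\bar A\},\{B,\bar B\},\{C,\bar C\}$. Whenever $\{P,\bar P\}$ and $\{Q,\bar Q\}$ are two (different) pairs already obtained, one forms the new pair $\{S,\bar S\}$ with $S:=PQ\wedge \bar P\bar Q$ and $\bar S:=P\bar Q\wedge \bar PQ$, and adds it to the collection of pairs; this is iterated. The points obtained are all points belonging to pairs produced in this way. *)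

theory Defs
  imports "HOL-Analysis.Analysis" "HOL-Analysis.Cross3"
begin

type_synonym pt = "real^3"

text \<open>Real projective plane via homogeneous coordinates: a point is represented by a
  nonzero vector of real^3, two representatives denote the same point iff their cross
  product vanishes.  The line through distinct points P, Q has coordinate vector
  cross3 P Q, and the intersection of distinct lines l, m is cross3 l m.\<close>

definition proj_point :: "pt \<Rightarrow> bool" where
  "proj_point p \<longleftrightarrow> p \<noteq> 0"

definition proj_eq :: "pt \<Rightarrow> pt \<Rightarrow> bool" where
  "proj_eq p q \<longleftrightarrow> cross3 p q = 0"

definition line_through :: "pt \<Rightarrow> pt \<Rightarrow> pt" where
  "line_through p q = cross3 p q"

definition meet :: "pt \<Rightarrow> pt \<Rightarrow> pt" where
  "meet l m = cross3 l m"

definition proj_collinear :: "pt set \<Rightarrow> bool" where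
  "proj_collinear S \<longleftrightarrow> (\<exists>l::pt. l \<noteq> 0 \<and> (\<forall>p\<in>S. l \<bullet> p = 0))"

definition pair_eq :: "pt \<times> pt \<Rightarrow> pt \<times> pt \<Rightarrow> bool" where
  "pair_eq X Y \<longleftrightarrow>
     (proj_eq (fst X) (fst Y) \<and> proj_eq (snd X) (snd Y)) \<or>
     (proj_eq (fst X) (snd Y) \<and> proj_eq (snd X) (fst Y))"

text \<open>Complete quadrilateral: four lines, no three concurrent; its three pairs of
  opposite vertices are (l1/\l2, l3/\l4), (l1/\l3, l2/\l4), (l1/\l4, l2/\l3).\<close>
definition complete_quadrilateral :: "pt \<Rightarrow> pt \<Rightarrow> pt \<Rightarrow> pt \<Rightarrow> bool" where
  "complete_quadrilateral l1 l2 l3 l4 \<longleftrightarrow>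
     l1 \<noteq> 0 \<and> l2 \<noteq> 0 \<and> l3 \<noteq> 0 \<and> l4 \<noteq> 0 \<and>
     cross3 l1 l2 \<bullet> l3 \<noteq> 0 \<and> cross3 l1 l2 \<bullet> l4 \<noteq> 0 \<and>
     cross3 l1 l3 \<bullet> l4 \<noteq> 0 \<and> cross3 l2 l3 \<bullet> l4 \<noteq> 0"

definition quad_opposite_pairs ::
  "pt \<Rightarrow> pt \<Rightarrow> pt \<Rightarrow> pt \<Rightarrow> (pt \<times> pt) list" where
  "quad_opposite_pairs l1 l2 l3 l4 =
     [(meet l1 l2, meet l3 l4), (meet l1 l3, meet l2 l4), (meet l1 l4, meet l2 l3)]"

definition opposite_vertex_pairs ::
  "pt \<times> pt \<Rightarrow> pt \<times> pt \<Rightarrow> pt \<times> pt \<Rightarrow> bool" where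
  "opposite_vertex_pairs X Y Z \<longleftrightarrow>
     (\<exists>l1 l2 l3 l4. complete_quadrilateral l1 l2 l3 l4 \<and>
        (\<forall>G\<in>{X, Y, Z}. \<exists>Q\<in>set (quad_opposite_pairs l1 l2 l3 l4). pair_eq G Q) \<and>
        (\<forall>Q\<in>set (quad_opposite_pairs l1 l2 l3 l4). \<exists>G\<in>{X, Y, Z}. pair_eq G Q))"

text \<open>Schroeter's construction, as a set of ordered pairs (P, Pbar) (both orientations
  of each base pair are included, hence of every constructed pair).\<close>
inductive_set schroeter ::
  "pt \<Rightarrow> pt \<Rightarrow> pt \<Rightarrow> pt \<Rightarrow> pt \<Rightarrow> pt \<Rightarrow> (pt \<times> pt) set"
  for A Ab B Bb C Cb
where
  baseA: "(A, Ab) \<in> schroeter A Ab B Bb C Cb"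
| baseA': "(Ab, A) \<in> schroeter A Ab B Bb C Cb"
| baseB: "(B, Bb) \<in> schroeter A Ab B Bb C Cb"
| baseB': "(Bb, B) \<in> schroeter A Ab B Bb C Cb"
| baseC: "(C, Cb) \<in> schroeter A Ab B Bb C Cb"
| baseC': "(Cb, C) \<in> schroeter A Ab B Bb C Cb"
| step: "\<lbrakk> (P, Pb) \<in> schroeter A Ab B Bb C Cb; (Q, Qb) \<in> schroeter A Ab B Bb C Cb;
           \<not> pair_eq (P, Pb) (Q, Qb);
           \<not> proj_eq P Q; \<not> proj_eq Pb Qb; \<not> proj_eq P Qb; \<not> proj_eq Pb Q;
           meet (line_through P Q) (line_through Pb Qb) \<noteq> 0;
           meet (line_through P Qb) (line_through Pb Q) \<noteq> 0 \<rbrakk> \<Longrightarrow>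
         (meet (line_through P Q) (line_through Pb Qb),
          meet (line_through P Qb) (line_through Pb Q)) \<in> schroeter A Ab B Bb C Cb"

text \<open>Cubic curves: zero sets of nonzero homogeneous cubic forms in the homogeneous
  coordinates, given by coefficients on the ten monomials x^i y^j z^k, i+j+k=3.\<close>
definition cubic_monomials :: "(nat \<times> nat \<times> nat) set" where
  "cubic_monomials = {(i, j, k). i + j + k = 3}"

definition cubic_form :: "(nat \<times> nat \<times> nat \<Rightarrow> real) \<Rightarrow> pt \<Rightarrow> real" where
  "cubic_form c p = (\<Sum>(i, j, k)\<in>cubic_monomials. c (i, j, k) * p$1 ^ i * p$2 ^ j * p$3 ^ k)"

definition nonzero_cubic :: "(nat \<times> nat \<times> nat \<Rightarrow> real) \<Rightarrow> bool" where
  "nonzero_cubic c \<longleftrightarrow> (\<exists>m\<in>cubic_monomials. c m \<noteq> 0)"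

end

theory Submission
  imports Defs
begin

definition bf :: "real^3^3 \<Rightarrow> pt \<Rightarrow> pt \<Rightarrow> real" where
  "bf M u v = u \<bullet> (M *v v)"

definition symm :: "real^3^3 \<Rightarrow> bool" where
  "symm M \<longleftrightarrow> (\<forall>i j. M$i$j = M$j$i)"

definition br :: "pt \<Rightarrow> pt \<Rightarrow> pt \<Rightarrow> real" where
  "br a b c = a \<bullet> cross3 b c"

definition inW :: "pt \<Rightarrow> pt \<Rightarrow> pt \<Rightarrow> pt \<Rightarrow> pt \<Rightarrow> pt \<Rightarrow> real^3^3 \<Rightarrow> bool" where
  "inW A Ab B Bb C Cb M \<longleftrightarrow> symm M \<and> bf M A Ab = 0 \<and> bf M B Bb = 0 \<and> bf M C Cb = 0"

definition goodX :: "pt \<Rightarrow> pt \<Rightarrow> pt \<Rightarrow> pt \<Rightarrow> pt \<Rightarrow> pt \<Rightarrow> pt \<Rightarrow> bool" where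
  "goodX X A Ab B Bb C Cb \<longleftrightarrow> (\<forall>M. inW A Ab B Bb C Cb M \<and> M *v X = 0 \<longrightarrow> M = 0)"

definition Good :: "pt \<Rightarrow> pt \<Rightarrow> pt \<Rightarrow> pt \<Rightarrow> pt \<Rightarrow> pt \<Rightarrow> bool" where
  "Good A Ab B Bb C Cb \<longleftrightarrow> (\<exists>X. goodX X A Ab B Bb C Cb)"

lemma bf_expand: "bf M u v = u$1*(M$1$1 * v$1 + M$1$2 * v$2 + M$1$3 * v$3) + u$2*(M$2$1 * v$1 + M$2$2 * v$2 + M$2$3 * v$3) + u$3*(M$3$1 * v$1 + M$3$2 * v$2 + M$3$3 * v$3)"
  by (simp add: bf_def inner_vec_def matrix_vector_mult_def sum_3)

lemma br_expand: "br a b c = a$1*(b$2*c$3 - b$3*c$2) + a$2*(b$3*c$1 - b$1*c$3) + a$3*(b$1*c$2 - b$2*c$1)"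
  by (simp add: br_def cross3_def inner_vec_def sum_3)

lemma cross_comp: "cross3 a b $ 1 = a$2 * b$3 - a$3 * b$2" "cross3 a b $ 2 = a$3 * b$1 - a$1 * b$3" "cross3 a b $ 3 = a$1 * b$2 - a$2 * b$1"
  by (simp_all add: cross3_def)

lemma bf_sym: "symm M \<Longrightarrow> bf M u v = bf M v u"
  unfolding bf_expand symm_def by (simp add: algebra_simps)

lemma step_identity:
  assumes "symm M"
  shows "bf M (cross3 (cross3 P Q) (cross3 Pb Qb)) (cross3 (cross3 P Qb) (cross3 Pb Q)) =
     - (br P Q Qb * br Pb Q Qb) * bf M P Pb + (br Q P Pb * br Qb P Pb) * bf M Q Qb"
proof -
  have s: "M$2$1 = M$1$2" "M$3$1 = M$1$3" "M$3$2 = M$2$3" using assms by (auto simp: symm_def)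
  show ?thesis unfolding bf_expand br_expand cross_comp s by algebra
qed

lemma invariant:
  assumes "(P, Pb) \<in> schroeter A Ab B Bb C Cb"
    and "A \<noteq> 0" "Ab \<noteq> 0" "B \<noteq> 0" "Bb \<noteq> 0" "C \<noteq> 0" "Cb \<noteq> 0"
  shows "P \<noteq> 0 \<and> Pb \<noteq> 0 \<and> (\<forall>M. inW A Ab B Bb C Cb M \<longrightarrow> bf M P Pb = 0)"
  using assms
proof (induction rule: schroeter.induct)
  case (step P Pb Q Qb)
  then show ?case
    by (auto simp: meet_def line_through_def step_identity inW_def)
qed (auto simp: inW_def bf_sym)

lemma triple_zero:
  fixes n u v w :: pt
  assumes "n \<noteq> 0" "n \<bullet> u = 0" "n \<bullet> v = 0" "n \<bullet> w = 0"
  shows "u \<bullet> cross3 v w = 0"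
proof -
  have "(u \<bullet> cross3 v w) *\<^sub>R n = (n \<bullet> u) *\<^sub>R cross3 v w + (n \<bullet> v) *\<^sub>R cross3 w u + (n \<bullet> w) *\<^sub>R cross3 u v"
    by (simp add: vec_eq_iff forall_3 cross_comp inner_vec_def sum_3 algebra_simps)
  with assms show ?thesis by simp
qed

lemma mono_aux: "(i::nat) + j + k = 3 \<Longrightarrow> (i,j,k) \<in> {(3,0,0),(2,1,0),(2,0,1),(1,2,0),(1,1,1),(1,0,2),(0,3,0),(0,2,1),(0,1,2),(0,0,3)}"
proof -
  assume h: "i + j + k = 3"
  have "i = 0 \<or> i = 1 \<or> i = 2 \<or> i = 3" using h by arith
  moreover have "j = 0 \<or> j = 1 \<or> j = 2 \<or> j = 3" using h by arith
  ultimately show ?thesis using h by (elim disjE; simp)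
qed
lemma cubic_monomials_explicit:
  "cubic_monomials = {(3,0,0),(2,1,0),(2,0,1),(1,2,0),(1,1,1),(1,0,2),(0,3,0),(0,2,1),(0,1,2),(0,0,3)}"
  unfolding cubic_monomials_def
  apply (rule set_eqI)
  apply clarify
  apply (rule iffI)
   apply (metis (mono_tags, lifting) case_prod_conv mem_Collect_eq mono_aux)
  apply (elim insertE; simp)
  done

definition cc :: "(3 \<Rightarrow> 3 \<Rightarrow> 3 \<Rightarrow> real) \<Rightarrow> nat \<times> nat \<times> nat \<Rightarrow> real" where
  "cc K m =
  (if m = (3, 0, 0) then K 1 1 1 else 0) +
  (if m = (2, 1, 0) then K 1 1 2 + K 1 2 1 + K 2 1 1 else 0) +
  (if m = (2, 0, 1) then K 1 1 3 + K 1 3 1 + K 3 1 1 else 0) +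
  (if m = (1, 2, 0) then K 1 2 2 + K 2 1 2 + K 2 2 1 else 0) +
  (if m = (1, 1, 1) then K 1 2 3 + K 1 3 2 + K 2 1 3 + K 2 3 1 + K 3 1 2 + K 3 2 1 else 0) +
  (if m = (1, 0, 2) then K 1 3 3 + K 3 1 3 + K 3 3 1 else 0) +
  (if m = (0, 3, 0) then K 2 2 2 else 0) +
  (if m = (0, 2, 1) then K 2 2 3 + K 2 3 2 + K 3 2 2 else 0) +
  (if m = (0, 1, 2) then K 2 3 3 + K 3 2 3 + K 3 3 2 else 0) +
  (if m = (0, 0, 3) then K 3 3 3 else 0)"

lemma cubic_form_cc:
  "cubic_form (cc K) Y = (\<Sum>a\<in>UNIV. \<Sum>b\<in>UNIV. \<Sum>d\<in>UNIV. K a b d * Y$a * Y$b * Y$d)"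
  unfolding cubic_form_def cubic_monomials_explicit
  apply (simp add: sum_3 cc_def power2_eq_square power3_eq_cube)
  apply algebra
  done

definition KM :: "real^3^3 \<Rightarrow> real^3^3 \<Rightarrow> real^3^3 \<Rightarrow> 3 \<Rightarrow> 3 \<Rightarrow> 3 \<Rightarrow> real" where
  "KM M1 M2 M3 a b d = br (column a M1) (column b M2) (column d M3)"

lemma F_eq:
  "(M1 *v Y) \<bullet> cross3 (M2 *v Y) (M3 *v Y) = (\<Sum>a\<in>UNIV. \<Sum>b\<in>UNIV. \<Sum>d\<in>UNIV. KM M1 M2 M3 a b d * Y$a * Y$b * Y$d)"
  unfolding KM_def br_expand
  apply (simp add: sum_3 cross_comp inner_vec_def matrix_vector_mult_def column_def)
  apply algebra
  done

definition enc :: "(real^3) \<times> (real^3) \<Rightarrow> real^3^3" where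
  "enc p = vector [vector [fst p$1, snd p$3, snd p$2], vector [snd p$3, fst p$2, snd p$1], vector [snd p$2, snd p$1, fst p$3]]"

lemma enc_comp:
  "enc p $1$1 = fst p$1" "enc p $1$2 = snd p$3" "enc p $1$3 = snd p$2"
  "enc p $2$1 = snd p$3" "enc p $2$2 = fst p$2" "enc p $2$3 = snd p$1"
  "enc p $3$1 = snd p$2" "enc p $3$2 = snd p$1" "enc p $3$3 = fst p$3"
  by (simp_all add: enc_def)

lemma symm_enc: "symm (enc p)"
  unfolding symm_def by (simp add: forall_3 enc_comp)

definition psi :: "pt \<Rightarrow> pt \<Rightarrow> pt \<Rightarrow> pt \<Rightarrow> pt \<Rightarrow> pt \<Rightarrow> pt \<Rightarrow> (real^3) \<times> (real^3) \<Rightarrow> (real^3) \<times> (real^3)" where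
  "psi X A Ab B Bb C Cb p = (enc p *v X, vector [bf (enc p) A Ab, bf (enc p) B Bb, bf (enc p) C Cb])"

lemma mv_comp: "((M::real^3^3) *v x) $ i = M$i$1 * x$1 + M$i$2 * x$2 + M$i$3 * x$3"
  by (simp add: matrix_vector_mult_def sum_3)

lemma linear_psi: "linear (psi X A Ab B Bb C Cb)"
proof (rule linearI)
  fix x y :: "(real^3) \<times> (real^3)"
  show "psi X A Ab B Bb C Cb (x + y) = psi X A Ab B Bb C Cb x + psi X A Ab B Bb C Cb y"
    unfolding psi_def
    by (simp add: prod_eq_iff vec_eq_iff forall_3 mv_comp enc_comp bf_expand algebra_simps)
next
  fix c :: real and x :: "(real^3) \<times> (real^3)"
  show "psi X A Ab B Bb C Cb (c *\<^sub>R x) = c *\<^sub>R psi X A Ab B Bb C Cb x"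
    unfolding psi_def
    by (simp add: prod_eq_iff vec_eq_iff forall_3 mv_comp enc_comp bf_expand algebra_simps)
qed

lemma surj_psi:
  assumes "goodX X A Ab B Bb C Cb"
  shows "surj (psi X A Ab B Bb C Cb)"
proof -
  have inj: "inj (psi X A Ab B Bb C Cb)"
    unfolding linear_injective_0[OF linear_psi]
  proof (intro allI impI)
    fix p assume h: "psi X A Ab B Bb C Cb p = 0"
    hence "enc p *v X = 0" "bf (enc p) A Ab = 0" "bf (enc p) B Bb = 0" "bf (enc p) C Cb = 0"
      by (auto simp: psi_def prod_eq_iff vec_eq_iff forall_3)
    hence "enc p = 0" using assms symm_enc unfolding goodX_def inW_def by blast
    hence "fst p $ i = 0 \<and> snd p $ i = 0" for i
      using enc_comp[of p] exhaust_3[of i] by (auto simp: vec_eq_iff forall_3)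
    thus "p = 0" by (simp add: prod_eq_iff vec_eq_iff)
  qed
  show ?thesis by (rule linear_inj_imp_surj[OF linear_psi inj])
qed

lemma cubic_from_good:
  assumes good: "Good A Ab B Bb C Cb"
    and nz: "A \<noteq> 0" "Ab \<noteq> 0" "B \<noteq> 0" "Bb \<noteq> 0" "C \<noteq> 0" "Cb \<noteq> 0"
  shows "\<exists>c. nonzero_cubic c \<and>
           (\<forall>(P, Pb)\<in>schroeter A Ab B Bb C Cb. cubic_form c P = 0 \<and> cubic_form c Pb = 0)"
proof -
  obtain X where gX: "goodX X A Ab B Bb C Cb" using good Good_def by auto
  have su: "surj (psi X A Ab B Bb C Cb)" using surj_psi[OF gX] .
  have getM: "\<exists>M. inW A Ab B Bb C Cb M \<and> M *v X = axis i 1" for i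
  proof -
    obtain p where p: "(axis i 1, 0) = psi X A Ab B Bb C Cb p" using su by (metis surjD)
    hence "enc p *v X = axis i 1" "bf (enc p) A Ab = 0" "bf (enc p) B Bb = 0" "bf (enc p) C Cb = 0"
      by (auto simp: psi_def prod_eq_iff vec_eq_iff forall_3)
    thus ?thesis using symm_enc[of p] unfolding inW_def by blast
  qed
  obtain M1 where M1: "inW A Ab B Bb C Cb M1" "M1 *v X = axis 1 1" using getM by blast
  obtain M2 where M2: "inW A Ab B Bb C Cb M2" "M2 *v X = axis 2 1" using getM by blast
  obtain M3 where M3: "inW A Ab B Bb C Cb M3" "M3 *v X = axis 3 1" using getM by blast
  define F where "F Y = (M1 *v Y) \<bullet> cross3 (M2 *v Y) (M3 *v Y)" for Y
  define c where "c = cc (KM M1 M2 M3)"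
  have cf: "cubic_form c Y = F Y" for Y
    unfolding c_def F_def cubic_form_cc F_eq ..
  have FX: "F X = 1"
    unfolding F_def M1(2) M2(2) M3(2)
    by (simp add: cross_comp inner_vec_def sum_3 axis_def)
  have nzc: "nonzero_cubic c"
  proof (rule ccontr)
    assume "\<not> nonzero_cubic c"
    hence "\<forall>m\<in>cubic_monomials. c m = 0" unfolding nonzero_cubic_def by blast
    hence "cubic_form c X = 0" unfolding cubic_form_def
      by (intro sum.neutral) auto
    thus False using cf FX by simp
  qed
  have van: "cubic_form c P = 0 \<and> cubic_form c Pb = 0" if mem: "(P, Pb) \<in> schroeter A Ab B Bb C Cb" for P Pb
  proof -
    have I: "P \<noteq> 0" "Pb \<noteq> 0" "\<And>M. inW A Ab B Bb C Cb M \<Longrightarrow> bf M P Pb = 0"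
      using invariant[OF mem nz] by auto
    have z1: "Pb \<bullet> (M *v P) = 0" "P \<bullet> (M *v Pb) = 0" if "inW A Ab B Bb C Cb M" for M
    proof -
      have "symm M" using that inW_def by blast
      have "bf M P Pb = 0" using I(3) that by blast
      thus "Pb \<bullet> (M *v P) = 0" "P \<bullet> (M *v Pb) = 0"
        using bf_sym[OF \<open>symm M\<close>, of P Pb] unfolding bf_def by auto
    qed
    have "F P = 0" unfolding F_def
      by (rule triple_zero[OF I(2)]) (use z1 M1 M2 M3 in auto)
    moreover have "F Pb = 0" unfolding F_def
      by (rule triple_zero[OF I(1)]) (use z1 M1 M2 M3 in auto)
    ultimately show ?thesis using cf by simp
  qed
  show ?thesis using nzc van by blast
qed

lemma br_perm: "br a b c = - br b a c" "br a b c = - br a c b" "br a b c = br b c a" "br a b c = br c a b"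
  by (simp_all add: br_expand algebra_simps)

lemma bf_add_left: "bf M (u + w) v = bf M u v + bf M w v"
  and bf_diff_left: "bf M (u - w) v = bf M u v - bf M w v"
  and bf_scale_left: "bf M (a *\<^sub>R u) v = a * bf M u v"
  and bf_add_right: "bf M v (u + w) = bf M v u + bf M v w"
  and bf_diff_right: "bf M v (u - w) = bf M v u - bf M v w"
  and bf_scale_right: "bf M v (a *\<^sub>R u) = a * bf M v u"
  by (simp_all add: bf_expand algebra_simps)

lemmas bf_lin = bf_add_left bf_diff_left bf_scale_left bf_add_right bf_diff_right bf_scale_right

lemma cramer: "br U W Z *\<^sub>R V = br V W Z *\<^sub>R U + br U V Z *\<^sub>R W + br U W V *\<^sub>R Z"
  by (simp add: vec_eq_iff forall_3 br_expand algebra_simps)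

lemma bf_X_right: "M *v X = 0 \<Longrightarrow> bf M v X = 0"
  by (simp add: bf_def)

lemma bf_X_left: "symm M \<Longrightarrow> M *v X = 0 \<Longrightarrow> bf M X v = 0"
  using bf_sym bf_X_right by metis

lemma span_zero:
  assumes "br U W Z \<noteq> 0" "bf M Y U = 0" "bf M Y W = 0" "bf M Y Z = 0"
  shows "bf M Y v = 0"
proof -
  have "br U W Z * bf M Y v = bf M Y (br U W Z *\<^sub>R v)" by (simp add: bf_lin)
  also have "\<dots> = 0" unfolding cramer[of U W Z v] by (simp add: bf_lin assms)
  finally show ?thesis using assms(1) by simp
qed

lemma basis_zero:
  assumes "br U W Z \<noteq> 0" "\<And>v. bf M U v = 0" "\<And>v. bf M W v = 0" "\<And>v. bf M Z v = 0"
  shows "M = 0"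
proof -
  have all: "bf M u v = 0" for u v
  proof -
    have "br U W Z * bf M u v = bf M (br U W Z *\<^sub>R u) v" by (simp add: bf_lin)
    also have "\<dots> = 0" unfolding cramer[of U W Z u] by (simp add: bf_lin assms)
    finally show ?thesis using assms(1) by simp
  qed
  have "M$i$j = bf M (axis i 1) (axis j 1)" for i j
    using exhaust_3[of i] exhaust_3[of j] by (auto simp: bf_expand axis_def)
  thus ?thesis using all by (simp add: vec_eq_iff)
qed

lemma G1:
  assumes nz: "br P Pb Q \<noteq> 0" "br P Pb R \<noteq> 0" "br P Q R \<noteq> 0" "br P Q Rb \<noteq> 0" "br Pb Q R \<noteq> 0" "br Pb Qb R \<noteq> 0"
  shows "goodX (br P Pb R *\<^sub>R Q - br Q Pb R *\<^sub>R P) P Pb Q Qb R Rb"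
  unfolding goodX_def inW_def
proof (intro allI impI, elim conjE)
  fix M assume sy: "symm M" and hP: "bf M P Pb = 0" and hQ: "bf M Q Qb = 0" and hR: "bf M R Rb = 0"
    and hX: "M *v (br P Pb R *\<^sub>R Q - br Q Pb R *\<^sub>R P) = 0"
  define X where "X = br P Pb R *\<^sub>R Q - br Q Pb R *\<^sub>R P"
  have X2: "X = br P Q R *\<^sub>R Pb - br P Q Pb *\<^sub>R R"
    unfolding X_def by (simp add: vec_eq_iff forall_3 br_expand algebra_simps)
  have bX: "bf M X v = 0" for v using bf_X_left[OF sy] hX X_def by simp
  have r1: "br P Pb R * bf M Q v = br Q Pb R * bf M P v" for v
    using bX[of v] unfolding X_def by (simp add: bf_lin)
  have r2: "br P Q R * bf M Pb v = br P Q Pb * bf M R v" for v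
    using bX[of v] unfolding X2 by (simp add: bf_lin)
  have d: "br P Q Pb \<noteq> 0" using nz(1) br_perm(2)[of P Pb Q] by simp
  have s1: "bf M R P = 0"
    using r2[of P] hP bf_sym[OF sy, of Pb P] d by simp
  have s2: "bf M P Qb = 0"
    using r1[of Qb] hQ nz(5) br_perm(1)[of Q Pb R] by simp
  have e1: "br R Qb X = br P Q R * br R Qb Pb"
    unfolding X2 by (simp add: br_expand algebra_simps)
  have e1': "br R Qb Pb \<noteq> 0" using nz(6) br_perm(4)[of Pb Qb R] br_perm(1)[of R Pb Qb] br_perm(2)[of R Qb Pb] by auto
  have s3: "bf M P v = 0" for v
    by (rule span_zero[of R Qb X]) (use e1 e1' nz(3) s1 s2 bf_sym[OF sy] bX in auto)
  have e2: "br P Rb X = br P Pb R * br P Rb Q"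
    unfolding X_def by (simp add: br_expand algebra_simps)
  have e2': "br P Rb Q \<noteq> 0" using nz(4) br_perm(2)[of P Q Rb] by simp
  have s4: "bf M R v = 0" for v
    by (rule span_zero[of P Rb X]) (use e2 e2' nz(2) s1 hR bf_sym[OF sy] bX in auto)
  have e3: "br P R X = br P Pb R * br P R Q"
    unfolding X_def by (simp add: br_expand algebra_simps)
  have e3': "br P R Q \<noteq> 0" using nz(3) br_perm(2)[of P Q R] by simp
  show "M = 0"
    by (rule basis_zero[of P R X]) (use e3 e3' nz(2) s3 s4 bX in auto)
qed

lemma O1:
  assumes z: "br A B C = 0"
    and nz: "br Ab Bb Cb \<noteq> 0" "br Ab Bb C \<noteq> 0" "br Bb C Cb \<noteq> 0" "br A B Cb \<noteq> 0" "br A C Cb \<noteq> 0" "br Ab C Cb \<noteq> 0"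
  shows "goodX (br Ab Bb Cb *\<^sub>R C - br Ab Bb C *\<^sub>R Cb) A Ab B Bb C Cb"
  unfolding goodX_def inW_def
proof (intro allI impI, elim conjE)
  fix M assume sy: "symm M" and hA: "bf M A Ab = 0" and hB: "bf M B Bb = 0" and hC: "bf M C Cb = 0"
    and hX: "M *v (br Ab Bb Cb *\<^sub>R C - br Ab Bb C *\<^sub>R Cb) = 0"
  define X where "X = br Ab Bb Cb *\<^sub>R C - br Ab Bb C *\<^sub>R Cb"
  have X2: "X = br Ab C Cb *\<^sub>R Bb - br Bb C Cb *\<^sub>R Ab"
    unfolding X_def by (simp add: vec_eq_iff forall_3 br_expand algebra_simps)
  have bX: "bf M X v = 0" for v using bf_X_left[OF sy] hX X_def by simp
  have r1: "br Ab Bb Cb * bf M C v = br Ab Bb C * bf M Cb v" for v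
    using bX[of v] unfolding X_def by (simp add: bf_lin)
  have r2: "br Ab C Cb * bf M Bb v = br Bb C Cb * bf M Ab v" for v
    using bX[of v] unfolding X2 by (simp add: bf_lin)
  have t1: "bf M C C = 0" using r1[of C] hC bf_sym[OF sy, of Cb C] nz(1) by simp
  have t2: "bf M Ab B = 0" using r2[of B] hB bf_sym[OF sy, of Bb B] nz(3) by simp
  have cr: "br A C Cb *\<^sub>R B = br B C Cb *\<^sub>R A + br A B Cb *\<^sub>R C"
    using cramer[of A C Cb B] z br_perm(2)[of A C B] by simp
  have "br A C Cb * bf M Ab B = br B C Cb * bf M Ab A + br A B Cb * bf M Ab C"
    using arg_cong[OF cr, of "bf M Ab"] by (simp add: bf_lin)
  hence t3: "bf M Ab C = 0" using t2 hA bf_sym[OF sy, of Ab A] nz(4) by simp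
  have e1: "br A C X = - (br Ab Bb C * br A C Cb)"
    unfolding X_def by (simp add: br_expand algebra_simps)
  have t4: "bf M Ab v = 0" for v
    by (rule span_zero[of A C X]) (use e1 nz t3 hA bf_sym[OF sy] bX in auto)
  have e2: "br Ab C X = - (br Ab Bb C * br Ab C Cb)"
    unfolding X_def by (simp add: br_expand algebra_simps)
  have t5: "bf M C v = 0" for v
    by (rule span_zero[of Ab C X]) (use e2 nz t3 t1 bf_sym[OF sy] bX in auto)
  show "M = 0"
    by (rule basis_zero[of Ab C X]) (use e2 nz t4 t5 bX in auto)
qed

lemma O2:
  assumes z: "br A Ab B = 0" "br A Bb C = 0" "br Ab Bb Cb = 0" "br B C Cb = 0"
    and nz: "br A Ab Bb \<noteq> 0" "br B Ab Bb \<noteq> 0" "br A B Bb \<noteq> 0" "br C Ab Bb \<noteq> 0" "br A Cb Bb \<noteq> 0" "br A Ab Cb \<noteq> 0"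
  shows "goodX ((br B Ab Bb * br A Cb Bb) *\<^sub>R A + (br A B Bb * br A Cb Bb) *\<^sub>R Ab + (br A B Bb * br A Ab Cb) *\<^sub>R Bb) A Ab B Bb C Cb"
  unfolding goodX_def inW_def
proof (intro allI impI, elim conjE)
  fix M assume sy: "symm M" and hA: "bf M A Ab = 0" and hB: "bf M B Bb = 0" and hC: "bf M C Cb = 0"
    and hX: "M *v ((br B Ab Bb * br A Cb Bb) *\<^sub>R A + (br A B Bb * br A Cb Bb) *\<^sub>R Ab + (br A B Bb * br A Ab Cb) *\<^sub>R Bb) = 0"
  define k where "k = br A Ab Bb"
  define b1 where "b1 = br B Ab Bb"
  define b2 where "b2 = br A B Bb"
  define c1 where "c1 = br C Ab Bb"
  define c3 where "c3 = br A Ab C"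
  define d2 where "d2 = br A Cb Bb"
  define d3 where "d3 = br A Ab Cb"
  define X where "X = (b1 * d2) *\<^sub>R A + (b2 * d2) *\<^sub>R Ab + (b2 * d3) *\<^sub>R Bb"
  have bX: "bf M X v = 0" for v using bf_X_left[OF sy] hX unfolding X_def b1_def b2_def d2_def d3_def by simp
  have kB: "k *\<^sub>R B = b1 *\<^sub>R A + b2 *\<^sub>R Ab"
    using cramer[of A Ab Bb B] z(1) unfolding k_def b1_def b2_def by simp
  have kC: "k *\<^sub>R C = c1 *\<^sub>R A + c3 *\<^sub>R Bb"
    using cramer[of A Ab Bb C] z(2) br_perm(2)[of A C Bb] unfolding k_def c1_def c3_def by simp
  have kCb: "k *\<^sub>R Cb = d2 *\<^sub>R Ab + d3 *\<^sub>R Bb"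
    using cramer[of A Ab Bb Cb] z(3) br_perm(3)[of Cb Ab Bb] unfolding k_def d2_def d3_def by simp
  have "br (k *\<^sub>R B) (k *\<^sub>R C) (k *\<^sub>R Cb) = k^3 * br B C Cb"
    by (simp add: br_expand algebra_simps power3_eq_cube)
  hence "br (b1 *\<^sub>R A + b2 *\<^sub>R Ab) (c1 *\<^sub>R A + c3 *\<^sub>R Bb) (d2 *\<^sub>R Ab + d3 *\<^sub>R Bb) = 0"
    using z(4) kB kC kCb by simp
  moreover have "br (b1 *\<^sub>R A + b2 *\<^sub>R Ab) (c1 *\<^sub>R A + c3 *\<^sub>R Bb) (d2 *\<^sub>R Ab + d3 *\<^sub>R Bb) = - k * (b1*c3*d2 + b2*c1*d3)"
    unfolding k_def by (simp add: br_expand algebra_simps)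
  ultimately have K: "b1*c3*d2 + b2*c1*d3 = 0" using nz(1) unfolding k_def by simp
  define m11 where "m11 = bf M A A"
  define m12 where "m12 = bf M A Ab"
  define m13 where "m13 = bf M A Bb"
  define m22 where "m22 = bf M Ab Ab"
  define m23 where "m23 = bf M Ab Bb"
  define m33 where "m33 = bf M Bb Bb"
  have sym: "bf M Ab A = m12" "bf M Bb A = m13" "bf M Bb Ab = m23"
    using bf_sym[OF sy] unfolding m12_def m13_def m23_def by metis+
  have E1: "b1*d2*m11 + b2*d2*m12 + b2*d3*m13 = 0"
    using bX[of A] bf_sym[OF sy, of X A] unfolding X_def m11_def m12_def m13_def by (simp add: bf_lin sym)
  have E2: "b1*d2*m12 + b2*d2*m22 + b2*d3*m23 = 0"
    using bX[of Ab] bf_sym[OF sy, of X Ab] unfolding X_def m22_def m23_def by (simp add: bf_lin sym)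
  have E3: "b1*d2*m13 + b2*d2*m23 + b2*d3*m33 = 0"
    using bX[of Bb] bf_sym[OF sy, of X Bb] unfolding X_def m33_def by (simp add: bf_lin sym)
  have PA: "m12 = 0" using hA m12_def by simp
  have PB: "b1*m13 + b2*m23 = 0"
  proof -
    have "bf M (k *\<^sub>R B) Bb = 0" using hB by (simp add: bf_lin)
    thus ?thesis unfolding kB by (simp add: bf_lin sym m13_def m23_def)
  qed
  have PC: "c1*d2*m12 + c1*d3*m13 + c3*d2*m23 + c3*d3*m33 = 0"
  proof -
    have "bf M (k *\<^sub>R C) (k *\<^sub>R Cb) = 0" using hC by (simp add: bf_lin)
    thus ?thesis unfolding kC kCb by (simp add: bf_lin sym m12_def m13_def m23_def m33_def algebra_simps)
  qed
  have nb1: "b1 \<noteq> 0" and nb2: "b2 \<noteq> 0" and nc1: "c1 \<noteq> 0" and nd2: "d2 \<noteq> 0" and nd3: "d3 \<noteq> 0"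
    using nz unfolding b1_def b2_def c1_def d2_def d3_def by auto
  have "b2*d3*m33 = - d2 * (b1*m13 + b2*m23)" using E3 by (simp add: algebra_simps)
  hence z33: "m33 = 0" using PB nb2 nd3 by simp
  have "b2 * (c1*d3*m13 + c3*d2*m23) = 0" using PC PA z33 by simp
  hence "c1*d3*b2*m13 + c3*d2*(b2*m23) = 0" by (simp add: algebra_simps)
  moreover have h1: "b2*m23 = -(b1*m13)" using PB by linarith
  ultimately have h2: "c1*d3*b2*m13 + c3*d2*(-(b1*m13)) = 0" by simp
  have "m13 * (b2*c1*d3 - b1*c3*d2) = c1*d3*b2*m13 + c3*d2*(-(b1*m13))" by (simp add: algebra_simps)
  hence "m13 * (b2*c1*d3 - b1*c3*d2) = 0" using h2 by simp
  moreover have "b2*c1*d3 - b1*c3*d2 = 2*(b2*c1*d3)" using K by (simp add: algebra_simps)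
  ultimately have "m13 * (2*(b2*c1*d3)) = 0" by simp
  hence z13: "m13 = 0" using nb2 nc1 nd3 by simp
  hence z23: "m23 = 0" using PB nb2 by simp
  have z11: "m11 = 0" using E1 PA z13 nb1 nd2 by simp
  have z22: "m22 = 0" using E2 PA z23 nb2 nd2 by simp
  have sA: "bf M A v = 0" for v
    by (rule span_zero[of A Ab Bb]) (use nz(1) z11 PA z13 in \<open>auto simp: m11_def m12_def m13_def\<close>)
  have sAb: "bf M Ab v = 0" for v
    by (rule span_zero[of A Ab Bb]) (use nz(1) PA z22 z23 sym in \<open>auto simp: m22_def m23_def\<close>)
  have sBb: "bf M Bb v = 0" for v
    by (rule span_zero[of A Ab Bb]) (use nz(1) z13 z23 z33 sym in \<open>auto simp: m33_def\<close>)
  show "M = 0"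
    by (rule basis_zero[of A Ab Bb]) (use nz(1) sA sAb sBb in auto)
qed

lemma proj_eq_meet:
  assumes "l \<bullet> P = 0" "m \<bullet> P = 0"
  shows "proj_eq P (meet l m)"
proof -
  have "cross3 P (cross3 l m) = (P \<bullet> m) *\<^sub>R l - (P \<bullet> l) *\<^sub>R m"
    by (simp add: vec_eq_iff forall_3 cross_comp inner_vec_def sum_3 algebra_simps)
  thus ?thesis using assms by (simp add: proj_eq_def meet_def inner_commute)
qed

lemma dot_cross_br: "cross3 a b \<bullet> c = br a b c"
  by (simp add: br_expand cross_comp inner_vec_def sum_3 algebra_simps)

lemma Q_even:
  assumes z: "br A B C = 0" "br A Bb Cb = 0" "br Ab B Cb = 0" "br Ab Bb C = 0"
    and nz: "br A B Bb \<noteq> 0" "br A Ab B \<noteq> 0" "br A Ab Bb \<noteq> 0" "br Ab B Bb \<noteq> 0"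
  shows "opposite_vertex_pairs (A, Ab) (B, Bb) (C, Cb)"
proof -
  define l1 where "l1 = cross3 A B"
  define l2 where "l2 = cross3 A Bb"
  define l3 where "l3 = cross3 Ab B"
  define l4 where "l4 = cross3 Ab Bb"
  have n1: "l1 \<noteq> 0" using nz(1) unfolding l1_def by (auto simp: dot_cross_br[symmetric])
  have n2: "l2 \<noteq> 0" using nz(3) br_perm(2)[of A Ab Bb] br_perm(4)[of A Bb Ab] unfolding l2_def
    by (auto simp: dot_cross_br[symmetric])
  have n3: "l3 \<noteq> 0" using nz(4) unfolding l3_def by (auto simp: dot_cross_br[symmetric])
  have n4: "l4 \<noteq> 0" using nz(4) br_perm(2)[of Ab B Bb] unfolding l4_def by (auto simp: dot_cross_br[symmetric])
  have c1: "cross3 l1 l2 \<bullet> l3 = br A B Bb * br A Ab B"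
    unfolding l1_def l2_def l3_def by (simp add: br_expand cross_comp inner_vec_def sum_3 algebra_simps)
  have c2: "cross3 l1 l2 \<bullet> l4 = br A B Bb * br A Ab Bb"
    unfolding l1_def l2_def l4_def by (simp add: br_expand cross_comp inner_vec_def sum_3 algebra_simps)
  have c3: "cross3 l1 l3 \<bullet> l4 = - (br A B Ab * br B Ab Bb)"
    unfolding l1_def l3_def l4_def by (simp add: br_expand cross_comp inner_vec_def sum_3 algebra_simps)
  have c4: "cross3 l2 l3 \<bullet> l4 = - (br A Bb Ab * br B Ab Bb)"
    unfolding l2_def l3_def l4_def by (simp add: br_expand cross_comp inner_vec_def sum_3 algebra_simps)
  have e1: "br A B Ab \<noteq> 0" using nz(2) br_perm(2)[of A Ab B] by simp
  have e2: "br B Ab Bb \<noteq> 0" using nz(4) br_perm(1)[of Ab B Bb] by simp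
  have e3: "br A Bb Ab \<noteq> 0" using nz(3) br_perm(2)[of A Ab Bb] by simp
  have cq: "complete_quadrilateral l1 l2 l3 l4"
    unfolding complete_quadrilateral_def using n1 n2 n3 n4 c1 c2 c3 c4 nz e1 e2 e3 by simp
  have dots: "l1 \<bullet> A = 0" "l1 \<bullet> B = 0" "l1 \<bullet> C = 0"
    "l2 \<bullet> A = 0" "l2 \<bullet> Bb = 0" "l2 \<bullet> Cb = 0"
    "l3 \<bullet> Ab = 0" "l3 \<bullet> B = 0" "l3 \<bullet> Cb = 0"
    "l4 \<bullet> Ab = 0" "l4 \<bullet> Bb = 0" "l4 \<bullet> C = 0"
    unfolding l1_def l2_def l3_def l4_def dot_cross_br using z
    by (simp_all add: br_expand algebra_simps)
  have p1: "pair_eq (A, Ab) (meet l1 l2, meet l3 l4)"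
    unfolding pair_eq_def using proj_eq_meet dots by simp
  have p2: "pair_eq (B, Bb) (meet l1 l3, meet l2 l4)"
    unfolding pair_eq_def using proj_eq_meet dots by simp
  have p3: "pair_eq (C, Cb) (meet l1 l4, meet l2 l3)"
    unfolding pair_eq_def using proj_eq_meet dots by simp
  show ?thesis
    unfolding opposite_vertex_pairs_def quad_opposite_pairs_def
    using cq p1 p2 p3 by (intro exI[of _ l1] exI[of _ l2] exI[of _ l3] exI[of _ l4]) auto
qed

lemma pair_eq_swap: "pair_eq (a, b) Q = pair_eq (b, a) Q"
  by (auto simp: pair_eq_def)

lemma opp_swap3: "opposite_vertex_pairs X Y (a, b) = opposite_vertex_pairs X Y (b, a)"
  unfolding opposite_vertex_pairs_def using pair_eq_swap by auto

lemma Q_odd: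
  assumes z: "br A B Cb = 0" "br A Bb C = 0" "br Ab B C = 0" "br Ab Bb Cb = 0"
    and nz: "br A B Bb \<noteq> 0" "br A Ab B \<noteq> 0" "br A Ab Bb \<noteq> 0" "br Ab B Bb \<noteq> 0"
  shows "opposite_vertex_pairs (A, Ab) (B, Bb) (C, Cb)"
  using Q_even[of A B Cb Bb C Ab] z nz opp_swap3 by metis

lemma br0p:
  "br a b c = 0 \<longleftrightarrow> br b a c = 0"
  "br a b c = 0 \<longleftrightarrow> br a c b = 0"
  "br a b c = 0 \<longleftrightarrow> br c b a = 0"
  "br a b c = 0 \<longleftrightarrow> br b c a = 0"
  "br a b c = 0 \<longleftrightarrow> br c a b = 0"
  by (simp_all add: br_expand; argo)+

lemma G1':
  assumes "br P Pb Q \<noteq> 0" "br P Pb R \<noteq> 0" "br P Q R \<noteq> 0" "br P Q Rb \<noteq> 0" "br Pb Q R \<noteq> 0" "br Pb Qb R \<noteq> 0"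
  shows "Good P Pb Q Qb R Rb"
  using G1[OF assms] Good_def by blast

lemma O1':
  assumes "br Ab Bb Cb \<noteq> 0" "br Ab Bb C \<noteq> 0" "br Bb C Cb \<noteq> 0" "br A B Cb \<noteq> 0" "br A C Cb \<noteq> 0" "br Ab C Cb \<noteq> 0"
    and "br A B C = 0"
  shows "Good A Ab B Bb C Cb"
  using O1[OF assms(7) assms(1-6)] Good_def by blast

lemma O2':
  assumes "br A Ab Bb \<noteq> 0" "br B Ab Bb \<noteq> 0" "br A B Bb \<noteq> 0" "br C Ab Bb \<noteq> 0" "br A Cb Bb \<noteq> 0" "br A Ab Cb \<noteq> 0"
    and "br A Ab B = 0" "br A Bb C = 0" "br Ab Bb Cb = 0" "br B C Cb = 0"
  shows "Good A Ab B Bb C Cb"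
  using O2[OF assms(7-10) assms(1-6)] Good_def by blast

lemma Good_perm:
  assumes "\<And>M. symm M \<Longrightarrow> (bf M P1 P1b = 0 \<and> bf M P2 P2b = 0 \<and> bf M P3 P3b = 0) = (bf M A Ab = 0 \<and> bf M B Bb = 0 \<and> bf M C Cb = 0)"
    and "Good P1 P1b P2 P2b P3 P3b"
  shows "Good A Ab B Bb C Cb"
  using assms unfolding Good_def goodX_def inW_def by blast

lemma no4_aux:
  assumes "cross3 x y \<noteq> 0" "br x y z = 0" "br x y w = 0" "distinct [x,y,z,w]" "{x,y,z,w} \<subseteq> S"
    "\<forall>T. T \<subseteq> S \<and> card T = 4 \<longrightarrow> \<not> proj_collinear T"
  shows False
proof -
  have "br x y x = 0" "br x y y = 0" by (simp_all add: br_expand algebra_simps)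
  hence "proj_collinear {x,y,z,w}" unfolding proj_collinear_def
    using assms(1-3) by (intro exI[of _ "cross3 x y"]) (auto simp: dot_cross_br)
  moreover have "card {x,y,z,w} = 4" using assms(4) distinct_card[of "[x,y,z,w]"] by simp
  ultimately show False using assms(5,6) by blast
qed

lemma good_main:
  assumes cr: "cross3 A Ab \<noteq> 0" "cross3 A B \<noteq> 0" "cross3 A Bb \<noteq> 0" "cross3 A C \<noteq> 0" "cross3 A Cb \<noteq> 0"
     "cross3 Ab B \<noteq> 0" "cross3 Ab Bb \<noteq> 0" "cross3 Ab C \<noteq> 0" "cross3 Ab Cb \<noteq> 0"
     "cross3 B Bb \<noteq> 0" "cross3 B C \<noteq> 0" "cross3 B Cb \<noteq> 0"
     "cross3 Bb C \<noteq> 0" "cross3 Bb Cb \<noteq> 0" "cross3 C Cb \<noteq> 0"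
   and dist: "distinct [A, Ab, B, Bb, C, Cb]"
   and no4: "\<forall>T. T \<subseteq> {A, Ab, B, Bb, C, Cb} \<and> card T = 4 \<longrightarrow> \<not> proj_collinear T"
   and nq: "\<not> opposite_vertex_pairs (A, Ab) (B, Bb) (C, Cb)"
  shows "Good A Ab B Bb C Cb"
proof -
  have q1: "\<not> (br A B C = 0 \<and> br A Bb Cb = 0 \<and> br Ab B Cb = 0 \<and> br Ab Bb C = 0 \<and> br A B Bb \<noteq> 0 \<and> br A Ab B \<noteq> 0 \<and> br A Ab Bb \<noteq> 0 \<and> br Ab B Bb \<noteq> 0)"
    using Q_even nq by blast
  have q2: "\<not> (br A B Cb = 0 \<and> br A Bb C = 0 \<and> br Ab B C = 0 \<and> br Ab Bb Cb = 0 \<and> br A B Bb \<noteq> 0 \<and> br A Ab B \<noteq> 0 \<and> br A Ab Bb \<noteq> 0 \<and> br Ab B Bb \<noteq> 0)"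
    using Q_odd nq by blast
  have w0: "br A Ab B \<noteq> 0 \<Longrightarrow> br A Ab C \<noteq> 0 \<Longrightarrow> br A B C \<noteq> 0 \<Longrightarrow> br A B Cb \<noteq> 0 \<Longrightarrow> br Ab B C \<noteq> 0 \<Longrightarrow> br Ab Bb C \<noteq> 0 \<Longrightarrow> Good A Ab B Bb C Cb"
  proof -
    assume h: "br A Ab B \<noteq> 0" "br A Ab C \<noteq> 0" "br A B C \<noteq> 0" "br A B Cb \<noteq> 0" "br Ab B C \<noteq> 0" "br Ab Bb C \<noteq> 0"
    have "Good A Ab B Bb C Cb" by (rule G1') (use h  in auto)
    thus ?thesis by (rule Good_perm[rotated]) (auto simp: bf_sym)
  qed
  have w1: "br A Ab Bb \<noteq> 0 \<Longrightarrow> br A Ab Cb \<noteq> 0 \<Longrightarrow> br A Bb Cb \<noteq> 0 \<Longrightarrow> br A Bb C \<noteq> 0 \<Longrightarrow> br Ab Bb Cb \<noteq> 0 \<Longrightarrow> br Ab B Cb \<noteq> 0 \<Longrightarrow> Good A Ab B Bb C Cb"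
  proof -
    assume h: "br A Ab Bb \<noteq> 0" "br A Ab Cb \<noteq> 0" "br A Bb Cb \<noteq> 0" "br A Bb C \<noteq> 0" "br Ab Bb Cb \<noteq> 0" "br Ab B Cb \<noteq> 0"
    have "Good A Ab Bb B Cb C" by (rule G1') (use h  in auto)
    thus ?thesis by (rule Good_perm[rotated]) (auto simp: bf_sym)
  qed
  have w2: "br Ab B Bb \<noteq> 0 \<Longrightarrow> br B Bb C \<noteq> 0 \<Longrightarrow> br Ab B C \<noteq> 0 \<Longrightarrow> br Ab B Cb \<noteq> 0 \<Longrightarrow> br Ab Bb C \<noteq> 0 \<Longrightarrow> br A Bb C \<noteq> 0 \<Longrightarrow> Good A Ab B Bb C Cb"
  proof -
    assume h: "br Ab B Bb \<noteq> 0" "br B Bb C \<noteq> 0" "br Ab B C \<noteq> 0" "br Ab B Cb \<noteq> 0" "br Ab Bb C \<noteq> 0" "br A Bb C \<noteq> 0"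
    have "Good B Bb Ab A C Cb" by (rule G1') (use h br0p(4)[of Ab B Bb] br0p(1)[of Ab B C] br0p(1)[of Ab B Cb] br0p(1)[of Ab Bb C] br0p(1)[of A Bb C] in auto)
    thus ?thesis by (rule Good_perm[rotated]) (auto simp: bf_sym)
  qed
  have w3: "br A C Cb \<noteq> 0 \<Longrightarrow> br B C Cb \<noteq> 0 \<Longrightarrow> br A B C \<noteq> 0 \<Longrightarrow> br A Bb C \<noteq> 0 \<Longrightarrow> br A B Cb \<noteq> 0 \<Longrightarrow> br Ab B Cb \<noteq> 0 \<Longrightarrow> Good A Ab B Bb C Cb"
  proof -
    assume h: "br A C Cb \<noteq> 0" "br B C Cb \<noteq> 0" "br A B C \<noteq> 0" "br A Bb C \<noteq> 0" "br A B Cb \<noteq> 0" "br Ab B Cb \<noteq> 0"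
    have "Good C Cb A Ab B Bb" by (rule G1') (use h br0p(4)[of A C Cb] br0p(4)[of B C Cb] br0p(5)[of A B C] br0p(5)[of A Bb C] br0p(5)[of A B Cb] br0p(5)[of Ab B Cb] in auto)
    thus ?thesis by (rule Good_perm[rotated]) (auto simp: bf_sym)
  qed
  have w4: "br A Ab Bb \<noteq> 0 \<Longrightarrow> br A Ab Cb \<noteq> 0 \<Longrightarrow> br Ab Bb Cb \<noteq> 0 \<Longrightarrow> br Ab Bb C \<noteq> 0 \<Longrightarrow> br A Bb Cb \<noteq> 0 \<Longrightarrow> br A B Cb \<noteq> 0 \<Longrightarrow> Good A Ab B Bb C Cb"
  proof -
    assume h: "br A Ab Bb \<noteq> 0" "br A Ab Cb \<noteq> 0" "br Ab Bb Cb \<noteq> 0" "br Ab Bb C \<noteq> 0" "br A Bb Cb \<noteq> 0" "br A B Cb \<noteq> 0"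
    have "Good Ab A Bb B Cb C" by (rule G1') (use h br0p(1)[of A Ab Bb] br0p(1)[of A Ab Cb] in auto)
    thus ?thesis by (rule Good_perm[rotated]) (auto simp: bf_sym)
  qed
  have w5: "br Ab B Bb \<noteq> 0 \<Longrightarrow> br B Bb Cb \<noteq> 0 \<Longrightarrow> br Ab B Cb \<noteq> 0 \<Longrightarrow> br Ab B C \<noteq> 0 \<Longrightarrow> br Ab Bb Cb \<noteq> 0 \<Longrightarrow> br A Bb Cb \<noteq> 0 \<Longrightarrow> Good A Ab B Bb C Cb"
  proof -
    assume h: "br Ab B Bb \<noteq> 0" "br B Bb Cb \<noteq> 0" "br Ab B Cb \<noteq> 0" "br Ab B C \<noteq> 0" "br Ab Bb Cb \<noteq> 0" "br A Bb Cb \<noteq> 0"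
    have "Good B Bb Ab A Cb C" by (rule G1') (use h br0p(4)[of Ab B Bb] br0p(1)[of Ab B Cb] br0p(1)[of Ab B C] br0p(1)[of Ab Bb Cb] br0p(1)[of A Bb Cb] in auto)
    thus ?thesis by (rule Good_perm[rotated]) (auto simp: bf_sym)
  qed
  have w6: "br Ab C Cb \<noteq> 0 \<Longrightarrow> br Bb C Cb \<noteq> 0 \<Longrightarrow> br Ab Bb Cb \<noteq> 0 \<Longrightarrow> br Ab B Cb \<noteq> 0 \<Longrightarrow> br Ab Bb C \<noteq> 0 \<Longrightarrow> br A Bb C \<noteq> 0 \<Longrightarrow> Good A Ab B Bb C Cb"
  proof -
    assume h: "br Ab C Cb \<noteq> 0" "br Bb C Cb \<noteq> 0" "br Ab Bb Cb \<noteq> 0" "br Ab B Cb \<noteq> 0" "br Ab Bb C \<noteq> 0" "br A Bb C \<noteq> 0"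
    have "Good Cb C Ab A Bb B" by (rule G1') (use h br0p(3)[of Ab C Cb] br0p(3)[of Bb C Cb] br0p(5)[of Ab Bb Cb] br0p(5)[of Ab B Cb] br0p(5)[of Ab Bb C] br0p(5)[of A Bb C] in auto)
    thus ?thesis by (rule Good_perm[rotated]) (auto simp: bf_sym)
  qed
  have w7: "br A Bb C \<noteq> 0 \<Longrightarrow> br A Bb Cb \<noteq> 0 \<Longrightarrow> br Bb C Cb \<noteq> 0 \<Longrightarrow> br Ab B C \<noteq> 0 \<Longrightarrow> br Ab C Cb \<noteq> 0 \<Longrightarrow> br A C Cb \<noteq> 0 \<Longrightarrow> br Ab B Cb = 0 \<Longrightarrow> Good A Ab B Bb C Cb"
  proof -
    assume h: "br A Bb C \<noteq> 0" "br A Bb Cb \<noteq> 0" "br Bb C Cb \<noteq> 0" "br Ab B C \<noteq> 0" "br Ab C Cb \<noteq> 0" "br A C Cb \<noteq> 0" "br Ab B Cb = 0"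
    have "Good Ab A B Bb Cb C" by (rule O1') (use h br0p(2)[of Bb C Cb] br0p(2)[of Ab C Cb] br0p(2)[of A C Cb] in auto)
    thus ?thesis by (rule Good_perm[rotated]) (auto simp: bf_sym)
  qed
  have w8: "br A Ab Bb \<noteq> 0 \<Longrightarrow> br A Ab C \<noteq> 0 \<Longrightarrow> br A Bb C \<noteq> 0 \<Longrightarrow> br A Bb Cb \<noteq> 0 \<Longrightarrow> br Ab Bb C \<noteq> 0 \<Longrightarrow> br Ab B C \<noteq> 0 \<Longrightarrow> Good A Ab B Bb C Cb"
  proof -
    assume h: "br A Ab Bb \<noteq> 0" "br A Ab C \<noteq> 0" "br A Bb C \<noteq> 0" "br A Bb Cb \<noteq> 0" "br Ab Bb C \<noteq> 0" "br Ab B C \<noteq> 0"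
    have "Good A Ab Bb B C Cb" by (rule G1') (use h  in auto)
    thus ?thesis by (rule Good_perm[rotated]) (auto simp: bf_sym)
  qed
  have w9: "br Ab B Cb \<noteq> 0 \<Longrightarrow> br Ab B C \<noteq> 0 \<Longrightarrow> br B C Cb \<noteq> 0 \<Longrightarrow> br A Bb Cb \<noteq> 0 \<Longrightarrow> br A C Cb \<noteq> 0 \<Longrightarrow> br Ab C Cb \<noteq> 0 \<Longrightarrow> br A Bb C = 0 \<Longrightarrow> Good A Ab B Bb C Cb"
  proof -
    assume h: "br Ab B Cb \<noteq> 0" "br Ab B C \<noteq> 0" "br B C Cb \<noteq> 0" "br A Bb Cb \<noteq> 0" "br A C Cb \<noteq> 0" "br Ab C Cb \<noteq> 0" "br A Bb C = 0"
    have "Good A Ab Bb B C Cb" by (rule O1') (use h  in auto)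
    thus ?thesis by (rule Good_perm[rotated]) (auto simp: bf_sym)
  qed
  have w10: "br A Bb Cb \<noteq> 0 \<Longrightarrow> br A B Cb \<noteq> 0 \<Longrightarrow> br B Bb Cb \<noteq> 0 \<Longrightarrow> br Ab Bb C \<noteq> 0 \<Longrightarrow> br Ab B Bb \<noteq> 0 \<Longrightarrow> br A B Bb \<noteq> 0 \<Longrightarrow> br Ab B C = 0 \<Longrightarrow> Good A Ab B Bb C Cb"
  proof -
    assume h: "br A Bb Cb \<noteq> 0" "br A B Cb \<noteq> 0" "br B Bb Cb \<noteq> 0" "br Ab Bb C \<noteq> 0" "br Ab B Bb \<noteq> 0" "br A B Bb \<noteq> 0" "br Ab B C = 0"
    have "Good Ab A C Cb B Bb" by (rule O1') (use h br0p(2)[of A Bb Cb] br0p(2)[of A B Cb] br0p(5)[of B Bb Cb] br0p(2)[of Ab Bb C] br0p(2)[of Ab B C] in auto)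
    thus ?thesis by (rule Good_perm[rotated]) (auto simp: bf_sym)
  qed
  have w11: "br A Bb C \<noteq> 0 \<Longrightarrow> br A B C \<noteq> 0 \<Longrightarrow> br B Bb C \<noteq> 0 \<Longrightarrow> br Ab Bb Cb \<noteq> 0 \<Longrightarrow> br Ab B Bb \<noteq> 0 \<Longrightarrow> br A B Bb \<noteq> 0 \<Longrightarrow> br Ab B Cb = 0 \<Longrightarrow> Good A Ab B Bb C Cb"
  proof -
    assume h: "br A Bb C \<noteq> 0" "br A B C \<noteq> 0" "br B Bb C \<noteq> 0" "br Ab Bb Cb \<noteq> 0" "br Ab B Bb \<noteq> 0" "br A B Bb \<noteq> 0" "br Ab B Cb = 0"
    have "Good Ab A Cb C B Bb" by (rule O1') (use h br0p(2)[of A Bb C] br0p(2)[of A B C] br0p(5)[of B Bb C] br0p(2)[of Ab Bb Cb] br0p(2)[of Ab B Cb] in auto)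
    thus ?thesis by (rule Good_perm[rotated]) (auto simp: bf_sym)
  qed
  have w12: "br A B Cb \<noteq> 0 \<Longrightarrow> br Ab B Cb \<noteq> 0 \<Longrightarrow> br A Ab Cb \<noteq> 0 \<Longrightarrow> br A Bb C \<noteq> 0 \<Longrightarrow> br A Ab Bb \<noteq> 0 \<Longrightarrow> br A Ab B \<noteq> 0 \<Longrightarrow> br Ab Bb C = 0 \<Longrightarrow> Good A Ab B Bb C Cb"
  proof -
    assume h: "br A B Cb \<noteq> 0" "br Ab B Cb \<noteq> 0" "br A Ab Cb \<noteq> 0" "br A Bb C \<noteq> 0" "br A Ab Bb \<noteq> 0" "br A Ab B \<noteq> 0" "br Ab Bb C = 0"
    have "Good Bb B C Cb Ab A" by (rule O1') (use h br0p(4)[of A B Cb] br0p(4)[of Ab B Cb] br0p(3)[of A Ab Cb] br0p(4)[of A Bb C] br0p(3)[of A Ab Bb] br0p(3)[of A Ab B] br0p(4)[of Ab Bb C] in auto)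
    thus ?thesis by (rule Good_perm[rotated]) (auto simp: bf_sym)
  qed
  have w13: "br Ab Bb Cb \<noteq> 0 \<Longrightarrow> br Ab Bb C \<noteq> 0 \<Longrightarrow> br Bb C Cb \<noteq> 0 \<Longrightarrow> br A B Cb \<noteq> 0 \<Longrightarrow> br A C Cb \<noteq> 0 \<Longrightarrow> br Ab C Cb \<noteq> 0 \<Longrightarrow> br A B C = 0 \<Longrightarrow> Good A Ab B Bb C Cb"
  proof -
    assume h: "br Ab Bb Cb \<noteq> 0" "br Ab Bb C \<noteq> 0" "br Bb C Cb \<noteq> 0" "br A B Cb \<noteq> 0" "br A C Cb \<noteq> 0" "br Ab C Cb \<noteq> 0" "br A B C = 0"
    have "Good A Ab B Bb C Cb" by (rule O1') (use h  in auto)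
    thus ?thesis by (rule Good_perm[rotated]) (auto simp: bf_sym)
  qed
  have w14: "br Ab Bb C \<noteq> 0 \<Longrightarrow> br Ab Bb Cb \<noteq> 0 \<Longrightarrow> br Bb C Cb \<noteq> 0 \<Longrightarrow> br A B C \<noteq> 0 \<Longrightarrow> br A C Cb \<noteq> 0 \<Longrightarrow> br Ab C Cb \<noteq> 0 \<Longrightarrow> br A B Cb = 0 \<Longrightarrow> Good A Ab B Bb C Cb"
  proof -
    assume h: "br Ab Bb C \<noteq> 0" "br Ab Bb Cb \<noteq> 0" "br Bb C Cb \<noteq> 0" "br A B C \<noteq> 0" "br A C Cb \<noteq> 0" "br Ab C Cb \<noteq> 0" "br A B Cb = 0"
    have "Good A Ab B Bb Cb C" by (rule O1') (use h br0p(2)[of Bb C Cb] br0p(2)[of A C Cb] br0p(2)[of Ab C Cb] in auto)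
    thus ?thesis by (rule Good_perm[rotated]) (auto simp: bf_sym)
  qed
  have w15: "br A Bb Cb \<noteq> 0 \<Longrightarrow> br A Bb C \<noteq> 0 \<Longrightarrow> br Bb C Cb \<noteq> 0 \<Longrightarrow> br Ab B Cb \<noteq> 0 \<Longrightarrow> br Ab C Cb \<noteq> 0 \<Longrightarrow> br A C Cb \<noteq> 0 \<Longrightarrow> br Ab B C = 0 \<Longrightarrow> Good A Ab B Bb C Cb"
  proof -
    assume h: "br A Bb Cb \<noteq> 0" "br A Bb C \<noteq> 0" "br Bb C Cb \<noteq> 0" "br Ab B Cb \<noteq> 0" "br Ab C Cb \<noteq> 0" "br A C Cb \<noteq> 0" "br Ab B C = 0"
    have "Good Ab A B Bb C Cb" by (rule O1') (use h  in auto)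
    thus ?thesis by (rule Good_perm[rotated]) (auto simp: bf_sym)
  qed
  have w16: "br A Ab Bb \<noteq> 0 \<Longrightarrow> br Ab B Bb \<noteq> 0 \<Longrightarrow> br A B Bb \<noteq> 0 \<Longrightarrow> br Ab Bb C \<noteq> 0 \<Longrightarrow> br A Bb Cb \<noteq> 0 \<Longrightarrow> br A Ab Cb \<noteq> 0 \<Longrightarrow> br A Ab B = 0 \<Longrightarrow> br A Bb C = 0 \<Longrightarrow> br Ab Bb Cb = 0 \<Longrightarrow> br B C Cb = 0 \<Longrightarrow> Good A Ab B Bb C Cb"
  proof -
    assume h: "br A Ab Bb \<noteq> 0" "br Ab B Bb \<noteq> 0" "br A B Bb \<noteq> 0" "br Ab Bb C \<noteq> 0" "br A Bb Cb \<noteq> 0" "br A Ab Cb \<noteq> 0" "br A Ab B = 0" "br A Bb C = 0" "br Ab Bb Cb = 0" "br B C Cb = 0"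
    have "Good A Ab B Bb C Cb" by (rule O2') (use h br0p(1)[of Ab B Bb] br0p(5)[of Ab Bb C] br0p(2)[of A Bb Cb] in auto)
    thus ?thesis by (rule Good_perm[rotated]) (auto simp: bf_sym)
  qed
  have w17: "br A Ab Bb \<noteq> 0 \<Longrightarrow> br Ab B Bb \<noteq> 0 \<Longrightarrow> br A B Bb \<noteq> 0 \<Longrightarrow> br Ab Bb Cb \<noteq> 0 \<Longrightarrow> br A Bb C \<noteq> 0 \<Longrightarrow> br A Ab C \<noteq> 0 \<Longrightarrow> br A Ab B = 0 \<Longrightarrow> br A Bb Cb = 0 \<Longrightarrow> br Ab Bb C = 0 \<Longrightarrow> br B C Cb = 0 \<Longrightarrow> Good A Ab B Bb C Cb"
  proof -
    assume h: "br A Ab Bb \<noteq> 0" "br Ab B Bb \<noteq> 0" "br A B Bb \<noteq> 0" "br Ab Bb Cb \<noteq> 0" "br A Bb C \<noteq> 0" "br A Ab C \<noteq> 0" "br A Ab B = 0" "br A Bb Cb = 0" "br Ab Bb C = 0" "br B C Cb = 0"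
    have "Good A Ab B Bb Cb C" by (rule O2') (use h br0p(1)[of Ab B Bb] br0p(5)[of Ab Bb Cb] br0p(2)[of A Bb C] br0p(2)[of B C Cb] in auto)
    thus ?thesis by (rule Good_perm[rotated]) (auto simp: bf_sym)
  qed
  have w18: "br A Ab B \<noteq> 0 \<Longrightarrow> br Ab B Bb \<noteq> 0 \<Longrightarrow> br A B Bb \<noteq> 0 \<Longrightarrow> br Ab B C \<noteq> 0 \<Longrightarrow> br A B Cb \<noteq> 0 \<Longrightarrow> br A Ab Cb \<noteq> 0 \<Longrightarrow> br A Ab Bb = 0 \<Longrightarrow> br A B C = 0 \<Longrightarrow> br Ab B Cb = 0 \<Longrightarrow> br Bb C Cb = 0 \<Longrightarrow> Good A Ab B Bb C Cb"
  proof -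
    assume h: "br A Ab B \<noteq> 0" "br Ab B Bb \<noteq> 0" "br A B Bb \<noteq> 0" "br Ab B C \<noteq> 0" "br A B Cb \<noteq> 0" "br A Ab Cb \<noteq> 0" "br A Ab Bb = 0" "br A B C = 0" "br Ab B Cb = 0" "br Bb C Cb = 0"
    have "Good A Ab Bb B C Cb" by (rule O2') (use h br0p(5)[of Ab B Bb] br0p(2)[of A B Bb] br0p(5)[of Ab B C] br0p(2)[of A B Cb] in auto)
    thus ?thesis by (rule Good_perm[rotated]) (auto simp: bf_sym)
  qed
  have w19: "br A Ab B \<noteq> 0 \<Longrightarrow> br Ab B Bb \<noteq> 0 \<Longrightarrow> br A B Bb \<noteq> 0 \<Longrightarrow> br Ab B Cb \<noteq> 0 \<Longrightarrow> br A B C \<noteq> 0 \<Longrightarrow> br A Ab C \<noteq> 0 \<Longrightarrow> br A Ab Bb = 0 \<Longrightarrow> br A B Cb = 0 \<Longrightarrow> br Ab B C = 0 \<Longrightarrow> br Bb C Cb = 0 \<Longrightarrow> Good A Ab B Bb C Cb"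
  proof -
    assume h: "br A Ab B \<noteq> 0" "br Ab B Bb \<noteq> 0" "br A B Bb \<noteq> 0" "br Ab B Cb \<noteq> 0" "br A B C \<noteq> 0" "br A Ab C \<noteq> 0" "br A Ab Bb = 0" "br A B Cb = 0" "br Ab B C = 0" "br Bb C Cb = 0"
    have "Good A Ab Bb B Cb C" by (rule O2') (use h br0p(5)[of Ab B Bb] br0p(2)[of A B Bb] br0p(5)[of Ab B Cb] br0p(2)[of A B C] br0p(2)[of Bb C Cb] in auto)
    thus ?thesis by (rule Good_perm[rotated]) (auto simp: bf_sym)
  qed
  have w20: "br A Ab Cb \<noteq> 0 \<Longrightarrow> br Ab C Cb \<noteq> 0 \<Longrightarrow> br A C Cb \<noteq> 0 \<Longrightarrow> br Ab B Cb \<noteq> 0 \<Longrightarrow> br A Bb Cb \<noteq> 0 \<Longrightarrow> br A Ab Bb \<noteq> 0 \<Longrightarrow> br A Ab C = 0 \<Longrightarrow> br A B Cb = 0 \<Longrightarrow> br Ab Bb Cb = 0 \<Longrightarrow> br B Bb C = 0 \<Longrightarrow> Good A Ab B Bb C Cb"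
  proof -
    assume h: "br A Ab Cb \<noteq> 0" "br Ab C Cb \<noteq> 0" "br A C Cb \<noteq> 0" "br Ab B Cb \<noteq> 0" "br A Bb Cb \<noteq> 0" "br A Ab Bb \<noteq> 0" "br A Ab C = 0" "br A B Cb = 0" "br Ab Bb Cb = 0" "br B Bb C = 0"
    have "Good A Ab C Cb B Bb" by (rule O2') (use h br0p(1)[of Ab C Cb] br0p(1)[of Ab B Cb] br0p(2)[of A B Cb] br0p(2)[of Ab Bb Cb] br0p(5)[of B Bb C] in auto)
    thus ?thesis by (rule Good_perm[rotated]) (auto simp: bf_sym)
  qed
  have w21: "br A Ab Cb \<noteq> 0 \<Longrightarrow> br Ab C Cb \<noteq> 0 \<Longrightarrow> br A C Cb \<noteq> 0 \<Longrightarrow> br Ab Bb Cb \<noteq> 0 \<Longrightarrow> br A B Cb \<noteq> 0 \<Longrightarrow> br A Ab B \<noteq> 0 \<Longrightarrow> br A Ab C = 0 \<Longrightarrow> br A Bb Cb = 0 \<Longrightarrow> br Ab B Cb = 0 \<Longrightarrow> br B Bb C = 0 \<Longrightarrow> Good A Ab B Bb C Cb"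
  proof -
    assume h: "br A Ab Cb \<noteq> 0" "br Ab C Cb \<noteq> 0" "br A C Cb \<noteq> 0" "br Ab Bb Cb \<noteq> 0" "br A B Cb \<noteq> 0" "br A Ab B \<noteq> 0" "br A Ab C = 0" "br A Bb Cb = 0" "br Ab B Cb = 0" "br B Bb C = 0"
    have "Good A Ab C Cb Bb B" by (rule O2') (use h br0p(1)[of Ab C Cb] br0p(1)[of Ab Bb Cb] br0p(2)[of A Bb Cb] br0p(2)[of Ab B Cb] br0p(3)[of B Bb C] in auto)
    thus ?thesis by (rule Good_perm[rotated]) (auto simp: bf_sym)
  qed
  have w22: "br A Ab C \<noteq> 0 \<Longrightarrow> br Ab C Cb \<noteq> 0 \<Longrightarrow> br A C Cb \<noteq> 0 \<Longrightarrow> br Ab B C \<noteq> 0 \<Longrightarrow> br A Bb C \<noteq> 0 \<Longrightarrow> br A Ab Bb \<noteq> 0 \<Longrightarrow> br A Ab Cb = 0 \<Longrightarrow> br A B C = 0 \<Longrightarrow> br Ab Bb C = 0 \<Longrightarrow> br B Bb Cb = 0 \<Longrightarrow> Good A Ab B Bb C Cb"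
  proof -
    assume h: "br A Ab C \<noteq> 0" "br Ab C Cb \<noteq> 0" "br A C Cb \<noteq> 0" "br Ab B C \<noteq> 0" "br A Bb C \<noteq> 0" "br A Ab Bb \<noteq> 0" "br A Ab Cb = 0" "br A B C = 0" "br Ab Bb C = 0" "br B Bb Cb = 0"
    have "Good A Ab Cb C B Bb" by (rule O2') (use h br0p(5)[of Ab C Cb] br0p(2)[of A C Cb] br0p(1)[of Ab B C] br0p(2)[of A B C] br0p(2)[of Ab Bb C] br0p(5)[of B Bb Cb] in auto)
    thus ?thesis by (rule Good_perm[rotated]) (auto simp: bf_sym)
  qed
  have w23: "br A Ab C \<noteq> 0 \<Longrightarrow> br Ab C Cb \<noteq> 0 \<Longrightarrow> br A C Cb \<noteq> 0 \<Longrightarrow> br Ab Bb C \<noteq> 0 \<Longrightarrow> br A B C \<noteq> 0 \<Longrightarrow> br A Ab B \<noteq> 0 \<Longrightarrow> br A Ab Cb = 0 \<Longrightarrow> br A Bb C = 0 \<Longrightarrow> br Ab B C = 0 \<Longrightarrow> br B Bb Cb = 0 \<Longrightarrow> Good A Ab B Bb C Cb"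
  proof -
    assume h: "br A Ab C \<noteq> 0" "br Ab C Cb \<noteq> 0" "br A C Cb \<noteq> 0" "br Ab Bb C \<noteq> 0" "br A B C \<noteq> 0" "br A Ab B \<noteq> 0" "br A Ab Cb = 0" "br A Bb C = 0" "br Ab B C = 0" "br B Bb Cb = 0"
    have "Good A Ab Cb C Bb B" by (rule O2') (use h br0p(5)[of Ab C Cb] br0p(2)[of A C Cb] br0p(1)[of Ab Bb C] br0p(2)[of A Bb C] br0p(2)[of Ab B C] br0p(3)[of B Bb Cb] in auto)
    thus ?thesis by (rule Good_perm[rotated]) (auto simp: bf_sym)
  qed
  have w24: "br Ab B Bb \<noteq> 0 \<Longrightarrow> br A Ab Bb \<noteq> 0 \<Longrightarrow> br A Ab B \<noteq> 0 \<Longrightarrow> br Ab Bb C \<noteq> 0 \<Longrightarrow> br Ab B Cb \<noteq> 0 \<Longrightarrow> br B Bb Cb \<noteq> 0 \<Longrightarrow> br A B Bb = 0 \<Longrightarrow> br Ab B C = 0 \<Longrightarrow> br Ab Bb Cb = 0 \<Longrightarrow> br A C Cb = 0 \<Longrightarrow> Good A Ab B Bb C Cb"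
  proof -
    assume h: "br Ab B Bb \<noteq> 0" "br A Ab Bb \<noteq> 0" "br A Ab B \<noteq> 0" "br Ab Bb C \<noteq> 0" "br Ab B Cb \<noteq> 0" "br B Bb Cb \<noteq> 0" "br A B Bb = 0" "br Ab B C = 0" "br Ab Bb Cb = 0" "br A C Cb = 0"
    have "Good B Bb A Ab C Cb" by (rule O2') (use h br0p(4)[of Ab B Bb] br0p(2)[of A Ab Bb] br0p(5)[of A Ab B] br0p(3)[of Ab Bb C] br0p(4)[of Ab B Cb] br0p(4)[of A B Bb] br0p(1)[of Ab B C] br0p(1)[of Ab Bb Cb] in auto)
    thus ?thesis by (rule Good_perm[rotated]) (auto simp: bf_sym)
  qed
  have w25: "br Ab B Bb \<noteq> 0 \<Longrightarrow> br A Ab Bb \<noteq> 0 \<Longrightarrow> br A Ab B \<noteq> 0 \<Longrightarrow> br Ab Bb Cb \<noteq> 0 \<Longrightarrow> br Ab B C \<noteq> 0 \<Longrightarrow> br B Bb C \<noteq> 0 \<Longrightarrow> br A B Bb = 0 \<Longrightarrow> br Ab B Cb = 0 \<Longrightarrow> br Ab Bb C = 0 \<Longrightarrow> br A C Cb = 0 \<Longrightarrow> Good A Ab B Bb C Cb"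
  proof -
    assume h: "br Ab B Bb \<noteq> 0" "br A Ab Bb \<noteq> 0" "br A Ab B \<noteq> 0" "br Ab Bb Cb \<noteq> 0" "br Ab B C \<noteq> 0" "br B Bb C \<noteq> 0" "br A B Bb = 0" "br Ab B Cb = 0" "br Ab Bb C = 0" "br A C Cb = 0"
    have "Good B Bb A Ab Cb C" by (rule O2') (use h br0p(4)[of Ab B Bb] br0p(2)[of A Ab Bb] br0p(5)[of A Ab B] br0p(3)[of Ab Bb Cb] br0p(4)[of Ab B C] br0p(4)[of A B Bb] br0p(1)[of Ab B Cb] br0p(1)[of Ab Bb C] br0p(2)[of A C Cb] in auto)
    thus ?thesis by (rule Good_perm[rotated]) (auto simp: bf_sym)
  qed
  have w26: "br A B Bb \<noteq> 0 \<Longrightarrow> br A Ab Bb \<noteq> 0 \<Longrightarrow> br A Ab B \<noteq> 0 \<Longrightarrow> br A Bb C \<noteq> 0 \<Longrightarrow> br A B Cb \<noteq> 0 \<Longrightarrow> br B Bb Cb \<noteq> 0 \<Longrightarrow> br Ab B Bb = 0 \<Longrightarrow> br A B C = 0 \<Longrightarrow> br A Bb Cb = 0 \<Longrightarrow> br Ab C Cb = 0 \<Longrightarrow> Good A Ab B Bb C Cb"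
  proof -
    assume h: "br A B Bb \<noteq> 0" "br A Ab Bb \<noteq> 0" "br A Ab B \<noteq> 0" "br A Bb C \<noteq> 0" "br A B Cb \<noteq> 0" "br B Bb Cb \<noteq> 0" "br Ab B Bb = 0" "br A B C = 0" "br A Bb Cb = 0" "br Ab C Cb = 0"
    have "Good B Bb Ab A C Cb" by (rule O2') (use h br0p(4)[of A B Bb] br0p(4)[of A Ab Bb] br0p(3)[of A Ab B] br0p(3)[of A Bb C] br0p(4)[of A B Cb] br0p(4)[of Ab B Bb] br0p(1)[of A B C] br0p(1)[of A Bb Cb] in auto)
    thus ?thesis by (rule Good_perm[rotated]) (auto simp: bf_sym)
  qed
  have w27: "br A B Bb \<noteq> 0 \<Longrightarrow> br A Ab Bb \<noteq> 0 \<Longrightarrow> br A Ab B \<noteq> 0 \<Longrightarrow> br A Bb Cb \<noteq> 0 \<Longrightarrow> br A B C \<noteq> 0 \<Longrightarrow> br B Bb C \<noteq> 0 \<Longrightarrow> br Ab B Bb = 0 \<Longrightarrow> br A B Cb = 0 \<Longrightarrow> br A Bb C = 0 \<Longrightarrow> br Ab C Cb = 0 \<Longrightarrow> Good A Ab B Bb C Cb"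
  proof -
    assume h: "br A B Bb \<noteq> 0" "br A Ab Bb \<noteq> 0" "br A Ab B \<noteq> 0" "br A Bb Cb \<noteq> 0" "br A B C \<noteq> 0" "br B Bb C \<noteq> 0" "br Ab B Bb = 0" "br A B Cb = 0" "br A Bb C = 0" "br Ab C Cb = 0"
    have "Good B Bb Ab A Cb C" by (rule O2') (use h br0p(4)[of A B Bb] br0p(4)[of A Ab Bb] br0p(3)[of A Ab B] br0p(3)[of A Bb Cb] br0p(4)[of A B C] br0p(4)[of Ab B Bb] br0p(1)[of A B Cb] br0p(1)[of A Bb C] br0p(2)[of Ab C Cb] in auto)
    thus ?thesis by (rule Good_perm[rotated]) (auto simp: bf_sym)
  qed
  have n0: "\<not> (br A Ab B = 0 \<and> br A Ab Bb = 0)"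
    using no4_aux[of A Ab B Bb "{A, Ab, B, Bb, C, Cb}"] cr dist no4  by auto
  have n1: "\<not> (br A Ab B = 0 \<and> br A Ab C = 0)"
    using no4_aux[of A Ab B C "{A, Ab, B, Bb, C, Cb}"] cr dist no4  by auto
  have n2: "\<not> (br A Ab B = 0 \<and> br A Ab Cb = 0)"
    using no4_aux[of A Ab B Cb "{A, Ab, B, Bb, C, Cb}"] cr dist no4  by auto
  have n3: "\<not> (br A Ab Bb = 0 \<and> br A Ab C = 0)"
    using no4_aux[of A Ab Bb C "{A, Ab, B, Bb, C, Cb}"] cr dist no4  by auto
  have n4: "\<not> (br A Ab Bb = 0 \<and> br A Ab Cb = 0)"
    using no4_aux[of A Ab Bb Cb "{A, Ab, B, Bb, C, Cb}"] cr dist no4  by auto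
  have n5: "\<not> (br A Ab C = 0 \<and> br A Ab Cb = 0)"
    using no4_aux[of A Ab C Cb "{A, Ab, B, Bb, C, Cb}"] cr dist no4  by auto
  have n6: "\<not> (br A Ab B = 0 \<and> br A B Bb = 0)"
    using no4_aux[of A B Ab Bb "{A, Ab, B, Bb, C, Cb}"] cr dist no4 br0p(2)[of A Ab B] by auto
  have n7: "\<not> (br A Ab B = 0 \<and> br A B C = 0)"
    using no4_aux[of A B Ab C "{A, Ab, B, Bb, C, Cb}"] cr dist no4 br0p(2)[of A Ab B] by auto
  have n8: "\<not> (br A Ab B = 0 \<and> br A B Cb = 0)"
    using no4_aux[of A B Ab Cb "{A, Ab, B, Bb, C, Cb}"] cr dist no4 br0p(2)[of A Ab B] by auto
  have n9: "\<not> (br A B Bb = 0 \<and> br A B C = 0)"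
    using no4_aux[of A B Bb C "{A, Ab, B, Bb, C, Cb}"] cr dist no4  by auto
  have n10: "\<not> (br A B Bb = 0 \<and> br A B Cb = 0)"
    using no4_aux[of A B Bb Cb "{A, Ab, B, Bb, C, Cb}"] cr dist no4  by auto
  have n11: "\<not> (br A B C = 0 \<and> br A B Cb = 0)"
    using no4_aux[of A B C Cb "{A, Ab, B, Bb, C, Cb}"] cr dist no4  by auto
  have n12: "\<not> (br A Ab Bb = 0 \<and> br A B Bb = 0)"
    using no4_aux[of A Bb Ab B "{A, Ab, B, Bb, C, Cb}"] cr dist no4 br0p(2)[of A Ab Bb] br0p(2)[of A B Bb] by auto
  have n13: "\<not> (br A Ab Bb = 0 \<and> br A Bb C = 0)"
    using no4_aux[of A Bb Ab C "{A, Ab, B, Bb, C, Cb}"] cr dist no4 br0p(2)[of A Ab Bb] by auto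
  have n14: "\<not> (br A Ab Bb = 0 \<and> br A Bb Cb = 0)"
    using no4_aux[of A Bb Ab Cb "{A, Ab, B, Bb, C, Cb}"] cr dist no4 br0p(2)[of A Ab Bb] by auto
  have n15: "\<not> (br A B Bb = 0 \<and> br A Bb C = 0)"
    using no4_aux[of A Bb B C "{A, Ab, B, Bb, C, Cb}"] cr dist no4 br0p(2)[of A B Bb] by auto
  have n16: "\<not> (br A B Bb = 0 \<and> br A Bb Cb = 0)"
    using no4_aux[of A Bb B Cb "{A, Ab, B, Bb, C, Cb}"] cr dist no4 br0p(2)[of A B Bb] by auto
  have n17: "\<not> (br A Bb C = 0 \<and> br A Bb Cb = 0)"
    using no4_aux[of A Bb C Cb "{A, Ab, B, Bb, C, Cb}"] cr dist no4  by auto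
  have n18: "\<not> (br A Ab C = 0 \<and> br A B C = 0)"
    using no4_aux[of A C Ab B "{A, Ab, B, Bb, C, Cb}"] cr dist no4 br0p(2)[of A Ab C] br0p(2)[of A B C] by auto
  have n19: "\<not> (br A Ab C = 0 \<and> br A Bb C = 0)"
    using no4_aux[of A C Ab Bb "{A, Ab, B, Bb, C, Cb}"] cr dist no4 br0p(2)[of A Ab C] br0p(2)[of A Bb C] by auto
  have n20: "\<not> (br A Ab C = 0 \<and> br A C Cb = 0)"
    using no4_aux[of A C Ab Cb "{A, Ab, B, Bb, C, Cb}"] cr dist no4 br0p(2)[of A Ab C] by auto
  have n21: "\<not> (br A B C = 0 \<and> br A Bb C = 0)"
    using no4_aux[of A C B Bb "{A, Ab, B, Bb, C, Cb}"] cr dist no4 br0p(2)[of A B C] br0p(2)[of A Bb C] by auto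
  have n22: "\<not> (br A B C = 0 \<and> br A C Cb = 0)"
    using no4_aux[of A C B Cb "{A, Ab, B, Bb, C, Cb}"] cr dist no4 br0p(2)[of A B C] by auto
  have n23: "\<not> (br A Bb C = 0 \<and> br A C Cb = 0)"
    using no4_aux[of A C Bb Cb "{A, Ab, B, Bb, C, Cb}"] cr dist no4 br0p(2)[of A Bb C] by auto
  have n24: "\<not> (br A Ab Cb = 0 \<and> br A B Cb = 0)"
    using no4_aux[of A Cb Ab B "{A, Ab, B, Bb, C, Cb}"] cr dist no4 br0p(2)[of A Ab Cb] br0p(2)[of A B Cb] by auto
  have n25: "\<not> (br A Ab Cb = 0 \<and> br A Bb Cb = 0)"
    using no4_aux[of A Cb Ab Bb "{A, Ab, B, Bb, C, Cb}"] cr dist no4 br0p(2)[of A Ab Cb] br0p(2)[of A Bb Cb] by auto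
  have n26: "\<not> (br A Ab Cb = 0 \<and> br A C Cb = 0)"
    using no4_aux[of A Cb Ab C "{A, Ab, B, Bb, C, Cb}"] cr dist no4 br0p(2)[of A Ab Cb] br0p(2)[of A C Cb] by auto
  have n27: "\<not> (br A B Cb = 0 \<and> br A Bb Cb = 0)"
    using no4_aux[of A Cb B Bb "{A, Ab, B, Bb, C, Cb}"] cr dist no4 br0p(2)[of A B Cb] br0p(2)[of A Bb Cb] by auto
  have n28: "\<not> (br A B Cb = 0 \<and> br A C Cb = 0)"
    using no4_aux[of A Cb B C "{A, Ab, B, Bb, C, Cb}"] cr dist no4 br0p(2)[of A B Cb] br0p(2)[of A C Cb] by auto
  have n29: "\<not> (br A Bb Cb = 0 \<and> br A C Cb = 0)"
    using no4_aux[of A Cb Bb C "{A, Ab, B, Bb, C, Cb}"] cr dist no4 br0p(2)[of A Bb Cb] br0p(2)[of A C Cb] by auto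
  have n30: "\<not> (br A Ab B = 0 \<and> br Ab B Bb = 0)"
    using no4_aux[of Ab B A Bb "{A, Ab, B, Bb, C, Cb}"] cr dist no4 br0p(4)[of A Ab B] by auto
  have n31: "\<not> (br A Ab B = 0 \<and> br Ab B C = 0)"
    using no4_aux[of Ab B A C "{A, Ab, B, Bb, C, Cb}"] cr dist no4 br0p(4)[of A Ab B] by auto
  have n32: "\<not> (br A Ab B = 0 \<and> br Ab B Cb = 0)"
    using no4_aux[of Ab B A Cb "{A, Ab, B, Bb, C, Cb}"] cr dist no4 br0p(4)[of A Ab B] by auto
  have n33: "\<not> (br Ab B Bb = 0 \<and> br Ab B C = 0)"
    using no4_aux[of Ab B Bb C "{A, Ab, B, Bb, C, Cb}"] cr dist no4  by auto
  have n34: "\<not> (br Ab B Bb = 0 \<and> br Ab B Cb = 0)"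
    using no4_aux[of Ab B Bb Cb "{A, Ab, B, Bb, C, Cb}"] cr dist no4  by auto
  have n35: "\<not> (br Ab B C = 0 \<and> br Ab B Cb = 0)"
    using no4_aux[of Ab B C Cb "{A, Ab, B, Bb, C, Cb}"] cr dist no4  by auto
  have n36: "\<not> (br A Ab Bb = 0 \<and> br Ab B Bb = 0)"
    using no4_aux[of Ab Bb A B "{A, Ab, B, Bb, C, Cb}"] cr dist no4 br0p(4)[of A Ab Bb] br0p(2)[of Ab B Bb] by auto
  have n37: "\<not> (br A Ab Bb = 0 \<and> br Ab Bb C = 0)"
    using no4_aux[of Ab Bb A C "{A, Ab, B, Bb, C, Cb}"] cr dist no4 br0p(4)[of A Ab Bb] by auto
  have n38: "\<not> (br A Ab Bb = 0 \<and> br Ab Bb Cb = 0)"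
    using no4_aux[of Ab Bb A Cb "{A, Ab, B, Bb, C, Cb}"] cr dist no4 br0p(4)[of A Ab Bb] by auto
  have n39: "\<not> (br Ab B Bb = 0 \<and> br Ab Bb C = 0)"
    using no4_aux[of Ab Bb B C "{A, Ab, B, Bb, C, Cb}"] cr dist no4 br0p(2)[of Ab B Bb] by auto
  have n40: "\<not> (br Ab B Bb = 0 \<and> br Ab Bb Cb = 0)"
    using no4_aux[of Ab Bb B Cb "{A, Ab, B, Bb, C, Cb}"] cr dist no4 br0p(2)[of Ab B Bb] by auto
  have n41: "\<not> (br Ab Bb C = 0 \<and> br Ab Bb Cb = 0)"
    using no4_aux[of Ab Bb C Cb "{A, Ab, B, Bb, C, Cb}"] cr dist no4  by auto
  have n42: "\<not> (br A Ab C = 0 \<and> br Ab B C = 0)"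
    using no4_aux[of Ab C A B "{A, Ab, B, Bb, C, Cb}"] cr dist no4 br0p(4)[of A Ab C] br0p(2)[of Ab B C] by auto
  have n43: "\<not> (br A Ab C = 0 \<and> br Ab Bb C = 0)"
    using no4_aux[of Ab C A Bb "{A, Ab, B, Bb, C, Cb}"] cr dist no4 br0p(4)[of A Ab C] br0p(2)[of Ab Bb C] by auto
  have n44: "\<not> (br A Ab C = 0 \<and> br Ab C Cb = 0)"
    using no4_aux[of Ab C A Cb "{A, Ab, B, Bb, C, Cb}"] cr dist no4 br0p(4)[of A Ab C] by auto
  have n45: "\<not> (br Ab B C = 0 \<and> br Ab Bb C = 0)"
    using no4_aux[of Ab C B Bb "{A, Ab, B, Bb, C, Cb}"] cr dist no4 br0p(2)[of Ab B C] br0p(2)[of Ab Bb C] by auto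
  have n46: "\<not> (br Ab B C = 0 \<and> br Ab C Cb = 0)"
    using no4_aux[of Ab C B Cb "{A, Ab, B, Bb, C, Cb}"] cr dist no4 br0p(2)[of Ab B C] by auto
  have n47: "\<not> (br Ab Bb C = 0 \<and> br Ab C Cb = 0)"
    using no4_aux[of Ab C Bb Cb "{A, Ab, B, Bb, C, Cb}"] cr dist no4 br0p(2)[of Ab Bb C] by auto
  have n48: "\<not> (br A Ab Cb = 0 \<and> br Ab B Cb = 0)"
    using no4_aux[of Ab Cb A B "{A, Ab, B, Bb, C, Cb}"] cr dist no4 br0p(4)[of A Ab Cb] br0p(2)[of Ab B Cb] by auto
  have n49: "\<not> (br A Ab Cb = 0 \<and> br Ab Bb Cb = 0)"
    using no4_aux[of Ab Cb A Bb "{A, Ab, B, Bb, C, Cb}"] cr dist no4 br0p(4)[of A Ab Cb] br0p(2)[of Ab Bb Cb] by auto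
  have n50: "\<not> (br A Ab Cb = 0 \<and> br Ab C Cb = 0)"
    using no4_aux[of Ab Cb A C "{A, Ab, B, Bb, C, Cb}"] cr dist no4 br0p(4)[of A Ab Cb] br0p(2)[of Ab C Cb] by auto
  have n51: "\<not> (br Ab B Cb = 0 \<and> br Ab Bb Cb = 0)"
    using no4_aux[of Ab Cb B Bb "{A, Ab, B, Bb, C, Cb}"] cr dist no4 br0p(2)[of Ab B Cb] br0p(2)[of Ab Bb Cb] by auto
  have n52: "\<not> (br Ab B Cb = 0 \<and> br Ab C Cb = 0)"
    using no4_aux[of Ab Cb B C "{A, Ab, B, Bb, C, Cb}"] cr dist no4 br0p(2)[of Ab B Cb] br0p(2)[of Ab C Cb] by auto
  have n53: "\<not> (br Ab Bb Cb = 0 \<and> br Ab C Cb = 0)"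
    using no4_aux[of Ab Cb Bb C "{A, Ab, B, Bb, C, Cb}"] cr dist no4 br0p(2)[of Ab Bb Cb] br0p(2)[of Ab C Cb] by auto
  have n54: "\<not> (br A B Bb = 0 \<and> br Ab B Bb = 0)"
    using no4_aux[of B Bb A Ab "{A, Ab, B, Bb, C, Cb}"] cr dist no4 br0p(4)[of A B Bb] br0p(4)[of Ab B Bb] by auto
  have n55: "\<not> (br A B Bb = 0 \<and> br B Bb C = 0)"
    using no4_aux[of B Bb A C "{A, Ab, B, Bb, C, Cb}"] cr dist no4 br0p(4)[of A B Bb] by auto
  have n56: "\<not> (br A B Bb = 0 \<and> br B Bb Cb = 0)"
    using no4_aux[of B Bb A Cb "{A, Ab, B, Bb, C, Cb}"] cr dist no4 br0p(4)[of A B Bb] by auto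
  have n57: "\<not> (br Ab B Bb = 0 \<and> br B Bb C = 0)"
    using no4_aux[of B Bb Ab C "{A, Ab, B, Bb, C, Cb}"] cr dist no4 br0p(4)[of Ab B Bb] by auto
  have n58: "\<not> (br Ab B Bb = 0 \<and> br B Bb Cb = 0)"
    using no4_aux[of B Bb Ab Cb "{A, Ab, B, Bb, C, Cb}"] cr dist no4 br0p(4)[of Ab B Bb] by auto
  have n59: "\<not> (br B Bb C = 0 \<and> br B Bb Cb = 0)"
    using no4_aux[of B Bb C Cb "{A, Ab, B, Bb, C, Cb}"] cr dist no4  by auto
  have n60: "\<not> (br A B C = 0 \<and> br Ab B C = 0)"
    using no4_aux[of B C A Ab "{A, Ab, B, Bb, C, Cb}"] cr dist no4 br0p(4)[of A B C] br0p(4)[of Ab B C] by auto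
  have n61: "\<not> (br A B C = 0 \<and> br B Bb C = 0)"
    using no4_aux[of B C A Bb "{A, Ab, B, Bb, C, Cb}"] cr dist no4 br0p(4)[of A B C] br0p(2)[of B Bb C] by auto
  have n62: "\<not> (br A B C = 0 \<and> br B C Cb = 0)"
    using no4_aux[of B C A Cb "{A, Ab, B, Bb, C, Cb}"] cr dist no4 br0p(4)[of A B C] by auto
  have n63: "\<not> (br Ab B C = 0 \<and> br B Bb C = 0)"
    using no4_aux[of B C Ab Bb "{A, Ab, B, Bb, C, Cb}"] cr dist no4 br0p(4)[of Ab B C] br0p(2)[of B Bb C] by auto
  have n64: "\<not> (br Ab B C = 0 \<and> br B C Cb = 0)"
    using no4_aux[of B C Ab Cb "{A, Ab, B, Bb, C, Cb}"] cr dist no4 br0p(4)[of Ab B C] by auto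
  have n65: "\<not> (br B Bb C = 0 \<and> br B C Cb = 0)"
    using no4_aux[of B C Bb Cb "{A, Ab, B, Bb, C, Cb}"] cr dist no4 br0p(2)[of B Bb C] by auto
  have n66: "\<not> (br A B Cb = 0 \<and> br Ab B Cb = 0)"
    using no4_aux[of B Cb A Ab "{A, Ab, B, Bb, C, Cb}"] cr dist no4 br0p(4)[of A B Cb] br0p(4)[of Ab B Cb] by auto
  have n67: "\<not> (br A B Cb = 0 \<and> br B Bb Cb = 0)"
    using no4_aux[of B Cb A Bb "{A, Ab, B, Bb, C, Cb}"] cr dist no4 br0p(4)[of A B Cb] br0p(2)[of B Bb Cb] by auto
  have n68: "\<not> (br A B Cb = 0 \<and> br B C Cb = 0)"
    using no4_aux[of B Cb A C "{A, Ab, B, Bb, C, Cb}"] cr dist no4 br0p(4)[of A B Cb] br0p(2)[of B C Cb] by auto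
  have n69: "\<not> (br Ab B Cb = 0 \<and> br B Bb Cb = 0)"
    using no4_aux[of B Cb Ab Bb "{A, Ab, B, Bb, C, Cb}"] cr dist no4 br0p(4)[of Ab B Cb] br0p(2)[of B Bb Cb] by auto
  have n70: "\<not> (br Ab B Cb = 0 \<and> br B C Cb = 0)"
    using no4_aux[of B Cb Ab C "{A, Ab, B, Bb, C, Cb}"] cr dist no4 br0p(4)[of Ab B Cb] br0p(2)[of B C Cb] by auto
  have n71: "\<not> (br B Bb Cb = 0 \<and> br B C Cb = 0)"
    using no4_aux[of B Cb Bb C "{A, Ab, B, Bb, C, Cb}"] cr dist no4 br0p(2)[of B Bb Cb] br0p(2)[of B C Cb] by auto
  have n72: "\<not> (br A Bb C = 0 \<and> br Ab Bb C = 0)"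
    using no4_aux[of Bb C A Ab "{A, Ab, B, Bb, C, Cb}"] cr dist no4 br0p(4)[of A Bb C] br0p(4)[of Ab Bb C] by auto
  have n73: "\<not> (br A Bb C = 0 \<and> br B Bb C = 0)"
    using no4_aux[of Bb C A B "{A, Ab, B, Bb, C, Cb}"] cr dist no4 br0p(4)[of A Bb C] br0p(4)[of B Bb C] by auto
  have n74: "\<not> (br A Bb C = 0 \<and> br Bb C Cb = 0)"
    using no4_aux[of Bb C A Cb "{A, Ab, B, Bb, C, Cb}"] cr dist no4 br0p(4)[of A Bb C] by auto
  have n75: "\<not> (br Ab Bb C = 0 \<and> br B Bb C = 0)"
    using no4_aux[of Bb C Ab B "{A, Ab, B, Bb, C, Cb}"] cr dist no4 br0p(4)[of Ab Bb C] br0p(4)[of B Bb C] by auto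
  have n76: "\<not> (br Ab Bb C = 0 \<and> br Bb C Cb = 0)"
    using no4_aux[of Bb C Ab Cb "{A, Ab, B, Bb, C, Cb}"] cr dist no4 br0p(4)[of Ab Bb C] by auto
  have n77: "\<not> (br B Bb C = 0 \<and> br Bb C Cb = 0)"
    using no4_aux[of Bb C B Cb "{A, Ab, B, Bb, C, Cb}"] cr dist no4 br0p(4)[of B Bb C] by auto
  have n78: "\<not> (br A Bb Cb = 0 \<and> br Ab Bb Cb = 0)"
    using no4_aux[of Bb Cb A Ab "{A, Ab, B, Bb, C, Cb}"] cr dist no4 br0p(4)[of A Bb Cb] br0p(4)[of Ab Bb Cb] by auto
  have n79: "\<not> (br A Bb Cb = 0 \<and> br B Bb Cb = 0)"
    using no4_aux[of Bb Cb A B "{A, Ab, B, Bb, C, Cb}"] cr dist no4 br0p(4)[of A Bb Cb] br0p(4)[of B Bb Cb] by auto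
  have n80: "\<not> (br A Bb Cb = 0 \<and> br Bb C Cb = 0)"
    using no4_aux[of Bb Cb A C "{A, Ab, B, Bb, C, Cb}"] cr dist no4 br0p(4)[of A Bb Cb] br0p(2)[of Bb C Cb] by auto
  have n81: "\<not> (br Ab Bb Cb = 0 \<and> br B Bb Cb = 0)"
    using no4_aux[of Bb Cb Ab B "{A, Ab, B, Bb, C, Cb}"] cr dist no4 br0p(4)[of Ab Bb Cb] br0p(4)[of B Bb Cb] by auto
  have n82: "\<not> (br Ab Bb Cb = 0 \<and> br Bb C Cb = 0)"
    using no4_aux[of Bb Cb Ab C "{A, Ab, B, Bb, C, Cb}"] cr dist no4 br0p(4)[of Ab Bb Cb] br0p(2)[of Bb C Cb] by auto
  have n83: "\<not> (br B Bb Cb = 0 \<and> br Bb C Cb = 0)"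
    using no4_aux[of Bb Cb B C "{A, Ab, B, Bb, C, Cb}"] cr dist no4 br0p(4)[of B Bb Cb] br0p(2)[of Bb C Cb] by auto
  have n84: "\<not> (br A C Cb = 0 \<and> br Ab C Cb = 0)"
    using no4_aux[of C Cb A Ab "{A, Ab, B, Bb, C, Cb}"] cr dist no4 br0p(4)[of A C Cb] br0p(4)[of Ab C Cb] by auto
  have n85: "\<not> (br A C Cb = 0 \<and> br B C Cb = 0)"
    using no4_aux[of C Cb A B "{A, Ab, B, Bb, C, Cb}"] cr dist no4 br0p(4)[of A C Cb] br0p(4)[of B C Cb] by auto
  have n86: "\<not> (br A C Cb = 0 \<and> br Bb C Cb = 0)"
    using no4_aux[of C Cb A Bb "{A, Ab, B, Bb, C, Cb}"] cr dist no4 br0p(4)[of A C Cb] br0p(4)[of Bb C Cb] by auto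
  have n87: "\<not> (br Ab C Cb = 0 \<and> br B C Cb = 0)"
    using no4_aux[of C Cb Ab B "{A, Ab, B, Bb, C, Cb}"] cr dist no4 br0p(4)[of Ab C Cb] br0p(4)[of B C Cb] by auto
  have n88: "\<not> (br Ab C Cb = 0 \<and> br Bb C Cb = 0)"
    using no4_aux[of C Cb Ab Bb "{A, Ab, B, Bb, C, Cb}"] cr dist no4 br0p(4)[of Ab C Cb] br0p(4)[of Bb C Cb] by auto
  have n89: "\<not> (br B C Cb = 0 \<and> br Bb C Cb = 0)"
    using no4_aux[of C Cb B Bb "{A, Ab, B, Bb, C, Cb}"] cr dist no4 br0p(4)[of B C Cb] br0p(4)[of Bb C Cb] by auto
  show ?thesis using w0 w1 w2 w3 w4 w5 w6 w7 w8 w9 w10 w11 w12 w13 w14 w15 w16 w17 w18 w19 w20 w21 w22 w23 w24 w25 w26 w27 n0 n1 n2 n3 n4 n5 n6 n7 n8 n9 n10 n11 n12 n13 n14 n15 n16 n17 n18 n19 n20 n21 n22 n23 n24 n25 n26 n27 n28 n29 n30 n31 n32 n33 n34 n35 n36 n37 n38 n39 n40 n41 n42 n43 n44 n45 n46 n47 n48 n49 n50 n51 n52 n53 n54 n55 n56 n57 n58 n59 n60 n61 n62 n63 n64 n65 n66 n67 n68 n69 n70 n71 n72 n73 n74 n75 n76 n77 n78 n79 n80 n81 n82 n83 n84 n85 n86 n87 n88 n89 q1 q2 by sat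
qed

theorem theorem5:
  fixes A Ab B Bb C Cb :: "real^3"
  assumes points: "\<forall>p\<in>{A, Ab, B, Bb, C, Cb}. proj_point p"
    and distinct: "\<forall>p\<in>{A, Ab, B, Bb, C, Cb}. \<forall>q\<in>{A, Ab, B, Bb, C, Cb}.
                      p \<noteq> q \<longrightarrow> \<not> proj_eq p q"
    and distinct6: "card {A, Ab, B, Bb, C, Cb} = 6"
    and no4coll: "\<forall>T. T \<subseteq> {A, Ab, B, Bb, C, Cb} \<and> card T = 4 \<longrightarrow> \<not> proj_collinear T"
    and not_quad: "\<not> opposite_vertex_pairs (A, Ab) (B, Bb) (C, Cb)"
  shows "\<exists>c. nonzero_cubic c \<and>
           (\<forall>(P, Pb)\<in>schroeter A Ab B Bb C Cb. cubic_form c P = 0 \<and> cubic_form c Pb = 0)"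
proof -
  have nz: "A \<noteq> 0" "Ab \<noteq> 0" "B \<noteq> 0" "Bb \<noteq> 0" "C \<noteq> 0" "Cb \<noteq> 0"
    using points by (auto simp: proj_point_def)
  have dist: "distinct [A, Ab, B, Bb, C, Cb]"
    by (rule card_distinct) (use distinct6 in simp)
  have ne: "A \<noteq> Ab" "A \<noteq> B" "A \<noteq> Bb" "A \<noteq> C" "A \<noteq> Cb" "Ab \<noteq> B" "Ab \<noteq> Bb" "Ab \<noteq> C" "Ab \<noteq> Cb"
    "B \<noteq> Bb" "B \<noteq> C" "B \<noteq> Cb" "Bb \<noteq> C" "Bb \<noteq> Cb" "C \<noteq> Cb"
    using dist by auto
  have cr: "cross3 A Ab \<noteq> 0" "cross3 A B \<noteq> 0" "cross3 A Bb \<noteq> 0" "cross3 A C \<noteq> 0" "cross3 A Cb \<noteq> 0"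
     "cross3 Ab B \<noteq> 0" "cross3 Ab Bb \<noteq> 0" "cross3 Ab C \<noteq> 0" "cross3 Ab Cb \<noteq> 0"
     "cross3 B Bb \<noteq> 0" "cross3 B C \<noteq> 0" "cross3 B Cb \<noteq> 0"
     "cross3 Bb C \<noteq> 0" "cross3 Bb Cb \<noteq> 0" "cross3 C Cb \<noteq> 0"
    using distinct ne unfolding proj_eq_def by simp_all
  have "Good A Ab B Bb C Cb"
    using good_main[OF cr dist no4coll not_quad] .
  thus ?thesis using cubic_from_good nz by blast
qed

end
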